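(* (i) Let $W$ be a real entanglement witness on $\mathbb{C}^m\otimes\mathbb{C}^n$. If $W$ detects an entangled state $\rho$ (i.e. $\mathrm{tr}(W\rho)<0$), then $W$ also detects $\rho^*$ and $\rho^+$. Conversely, if a real entangled state $\rho$ is detected by an entanglement witness $W$, then $\rho$ is also detected by the two entanglement witnesses $W^*$ and $W^+$. (ii) An entangled state $\rho$ on $\mathbb{C}^m\otimes\mathbb{C}^n$ is detected by some real entanglement witness if and only if $\rho^+$ is a real entangled state.
   Context: An entanglement witness (EW) on $\mathbb{C}^m\otimes\mathbb{C}^n$ is a Hermitian matrix $W$ such that $\mathrm{tr}(W\sigma)\ge 0$ for every separable state $\sigma$ and $\mathrm{tr}(W\sigma)<0$ for at least one entangled state $\sigma$; $W$ detects a state $\rho$ if $\mathrm{tr}(W\rho)<0$. A real EW is an EW whose matrix (in the computational product basis) has real entries; a real state is a state whose density matrix has real entries. Separability/entanglement always refers to the standard definition over the complex Hilbert space. For a Hermitian $H$, $H^*$ is its entrywise complex conjugate and $H^+:=\frac12(H+H^* )$ is its real part. *)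

theory Defs
  imports "Jordan_Normal_Form.Matrix"
begin

text \<open>Matrices on C^m (x) C^n are complex (m*n) x (m*n) matrices of JNF type mat,
  indexed in the computational product basis: basis vector e_i (x) f_j has index i*n+j.\<close>

definition trace_mat :: "complex mat \<Rightarrow> complex" where
  "trace_mat A = (\<Sum>i<dim_row A. A $$ (i, i))"

definition kron :: "complex mat \<Rightarrow> complex mat \<Rightarrow> complex mat" where
  "kron A B = mat (dim_row A * dim_row B) (dim_col A * dim_col B)
     (\<lambda>(r, c). A $$ (r div dim_row B, c div dim_col B) * B $$ (r mod dim_row B, c mod dim_col B))"

definition hermitian :: "complex mat \<Rightarrow> bool" where
  "hermitian A \<longleftrightarrow> dim_row A = dim_col A \<and>
     (\<forall>i<dim_row A. \<forall>j<dim_row A. A $$ (i, j) = cnj (A $$ (j, i)))"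

definition psd :: "complex mat \<Rightarrow> bool" where
  "psd A \<longleftrightarrow> hermitian A \<and>
     (\<forall>v \<in> carrier_vec (dim_row A).
        0 \<le> Re (\<Sum>i<dim_row A. \<Sum>j<dim_row A. cnj (v $ i) * A $$ (i, j) * v $ j))"

definition is_state :: "nat \<Rightarrow> complex mat \<Rightarrow> bool" where
  "is_state d \<rho> \<longleftrightarrow> \<rho> \<in> carrier_mat d d \<and> psd \<rho> \<and> trace_mat \<rho> = 1"

definition separable :: "nat \<Rightarrow> nat \<Rightarrow> complex mat \<Rightarrow> bool" where
  "separable m n \<sigma> \<longleftrightarrow> \<sigma> \<in> carrier_mat (m * n) (m * n) \<and>
     (\<exists>(K::nat) (p::nat \<Rightarrow> real) A B.
        (\<forall>k<K. 0 \<le> p k \<and> is_state m (A k) \<and> is_state n (B k)) \<and>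
        (\<Sum>k<K. p k) = 1 \<and>
        (\<forall>r < m * n. \<forall>c < m * n.
           \<sigma> $$ (r, c) = (\<Sum>k<K. complex_of_real (p k) * kron (A k) (B k) $$ (r, c))))"

definition entangled :: "nat \<Rightarrow> nat \<Rightarrow> complex mat \<Rightarrow> bool" where
  "entangled m n \<rho> \<longleftrightarrow> is_state (m * n) \<rho> \<and> \<not> separable m n \<rho>"

definition detects :: "complex mat \<Rightarrow> complex mat \<Rightarrow> bool" where
  "detects W \<rho> \<longleftrightarrow> Re (trace_mat (W * \<rho>)) < 0"

definition ent_witness :: "nat \<Rightarrow> nat \<Rightarrow> complex mat \<Rightarrow> bool" where
  "ent_witness m n W \<longleftrightarrow> W \<in> carrier_mat (m * n) (m * n) \<and> hermitian W \<and>
     (\<forall>\<sigma>. separable m n \<sigma> \<longrightarrow> 0 \<le> Re (trace_mat (W * \<sigma>))) \<and>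
     (\<exists>\<sigma>. entangled m n \<sigma> \<and> detects W \<sigma>)"

definition mat_cnj :: "complex mat \<Rightarrow> complex mat" where
  "mat_cnj H = map_mat cnj H"

definition mat_realpart :: "complex mat \<Rightarrow> complex mat" where
  "mat_realpart H = (1/2 :: complex) \<cdot>\<^sub>m (H + mat_cnj H)"

definition real_mat :: "complex mat \<Rightarrow> bool" where
  "real_mat A \<longleftrightarrow> (\<forall>i<dim_row A. \<forall>j<dim_col A. Im (A $$ (i, j)) = 0)"

end

theory Submission
  imports Defs
begin


lemma trace_mult:
  assumes "A \<in> carrier_mat d e" "B \<in> carrier_mat e d"
  shows "trace_mat (A * B) = (\<Sum>i<d. \<Sum>j<e. A $$ (i, j) * B $$ (j, i))"
  using assms unfolding trace_mat_def
  by (auto simp: scalar_prod_def atLeast0LessThan intro!: sum.cong)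

lemma real_mat_cnj: "real_mat W \<Longrightarrow> mat_cnj W = W"
  unfolding real_mat_def mat_cnj_def
  by (intro eq_matI) (auto simp: complex_eq_iff)

lemma cnj_trace_mult:
  assumes "A \<in> carrier_mat d e" "B \<in> carrier_mat e d"
  shows "trace_mat (mat_cnj A * mat_cnj B) = cnj (trace_mat (A * B))"
proof -
  have "mat_cnj A \<in> carrier_mat d e" "mat_cnj B \<in> carrier_mat e d"
    using assms by (auto simp: mat_cnj_def)
  then show ?thesis using assms
    by (simp add: trace_mult mat_cnj_def cnj_sum)
qed

lemma realpart_index:
  "i < dim_row H \<Longrightarrow> j < dim_col H \<Longrightarrow>
    mat_realpart H $$ (i, j) = (H $$ (i,j) + cnj (H $$ (i,j))) / 2"
  by (simp add: mat_realpart_def mat_cnj_def)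

lemma realpart_carrier: "H \<in> carrier_mat a b \<Longrightarrow> mat_realpart H \<in> carrier_mat a b"
  by (simp add: mat_realpart_def mat_cnj_def)
lemma cnj_carrier: "H \<in> carrier_mat a b \<Longrightarrow> mat_cnj H \<in> carrier_mat a b"
  by (simp add: mat_cnj_def)
lemma realpart_real: "real_mat (mat_realpart H)"
  unfolding real_mat_def by (auto simp: mat_realpart_def mat_cnj_def)
lemma realpart_cnj: "mat_realpart (mat_cnj H) = mat_realpart H"
  by (intro eq_matI) (auto simp: mat_realpart_def mat_cnj_def)

lemma trace_linear_realpart:
  assumes "W \<in> carrier_mat d d" "R \<in> carrier_mat d d"
  shows "trace_mat (W * mat_realpart R) = (trace_mat (W * R) + trace_mat (W * mat_cnj R)) / 2"
proof -
  have "trace_mat (W * mat_realpart R) = (\<Sum>i<d. \<Sum>j<d. (W $$ (i, j) * R $$ (j, i) + W $$ (i, j) * cnj (R $$ (j, i))) / 2)"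
    using assms realpart_carrier[OF assms(2)]
    by (simp add: trace_mult realpart_index ring_distribs)
  also have "\<dots> = ((\<Sum>i<d. \<Sum>j<d. W $$ (i, j) * R $$ (j, i)) + (\<Sum>i<d. \<Sum>j<d. W $$ (i, j) * cnj (R $$ (j, i)))) / 2"
    by (simp add: sum.distrib flip: sum_divide_distrib)
  finally show ?thesis using assms cnj_carrier[OF assms(2)]
    by (simp add: trace_mult mat_cnj_def)
qed

lemma trace_cnj_left:
  assumes "W \<in> carrier_mat d d" "R \<in> carrier_mat d d"
  shows "trace_mat (mat_cnj W * R) = cnj (trace_mat (W * mat_cnj R))"
proof -
  have "mat_cnj (mat_cnj R) = R" by (intro eq_matI) (auto simp: mat_cnj_def)
  then show ?thesis using cnj_trace_mult[OF assms(1) cnj_carrier[OF assms(2)]] by simp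
qed

lemma Re_real_cnj:
  assumes "real_mat W" "W \<in> carrier_mat d d" "R \<in> carrier_mat d d"
  shows "Re (trace_mat (W * mat_cnj R)) = Re (trace_mat (W * R))"
    "Re (trace_mat (W * mat_realpart R)) = Re (trace_mat (W * R))"
proof -
  have "trace_mat (W * mat_cnj R) = cnj (trace_mat (W * R))"
    using trace_cnj_left[OF assms(2,3)] real_mat_cnj[OF assms(1)] 
    by (metis cnj_carrier assms(2,3) trace_cnj_left complex_cnj_cnj)
  then show "Re (trace_mat (W * mat_cnj R)) = Re (trace_mat (W * R))" by simp
  then show "Re (trace_mat (W * mat_realpart R)) = Re (trace_mat (W * R))"
    using trace_linear_realpart[OF assms(2,3)] by (simp add: add_divide_distrib)
qed



lemma hermitianD: "hermitian A \<Longrightarrow> i < dim_row A \<Longrightarrow> j < dim_row A \<Longrightarrow> A $$ (i, j) = cnj (A $$ (j, i))"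
  unfolding hermitian_def by blast

lemma hermitian_sq: "hermitian A \<Longrightarrow> dim_col A = dim_row A"
  unfolding hermitian_def by simp

lemma hermitian_cnj: assumes h: "hermitian A" shows "hermitian (mat_cnj A)"
  unfolding hermitian_def
proof (intro conjI allI impI)
  show "dim_row (mat_cnj A) = dim_col (mat_cnj A)" using hermitian_sq[OF h] by (simp add: mat_cnj_def)
  fix i j assume "i < dim_row (mat_cnj A)" "j < dim_row (mat_cnj A)"
  then show "mat_cnj A $$ (i, j) = cnj (mat_cnj A $$ (j, i))"
    using hermitian_sq[OF h] hermitianD[OF h, of i j] by (simp add: mat_cnj_def)
qed

lemma hermitian_realpart: assumes h: "hermitian A" shows "hermitian (mat_realpart A)"
  unfolding hermitian_def
proof (intro conjI allI impI)
  show "dim_row (mat_realpart A) = dim_col (mat_realpart A)" using hermitian_sq[OF h] by (simp add: mat_realpart_def mat_cnj_def)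
  fix i j assume "i < dim_row (mat_realpart A)" "j < dim_row (mat_realpart A)"
  then show "mat_realpart A $$ (i, j) = cnj (mat_realpart A $$ (j, i))"
    using hermitian_sq[OF h] hermitianD[OF h, of i j] by (simp add: mat_realpart_def mat_cnj_def)
qed

lemma psd_cnj: assumes "psd A" shows "psd (mat_cnj A)"
proof -
  have h: "hermitian A" and q: "\<And>v. v \<in> carrier_vec (dim_row A) \<Longrightarrow>
        0 \<le> Re (\<Sum>i<dim_row A. \<Sum>j<dim_row A. cnj (v $ i) * A $$ (i, j) * v $ j)"
    using assms unfolding psd_def by auto
  have "hermitian (mat_cnj A)" using hermitian_cnj[OF h] .
  moreover have "0 \<le> Re (\<Sum>i<dim_row A. \<Sum>j<dim_row A. cnj (v $ i) * mat_cnj A $$ (i, j) * v $ j)"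
    if v: "v \<in> carrier_vec (dim_row A)" for v
  proof -
    let ?w = "map_vec cnj v"
    have w: "?w \<in> carrier_vec (dim_row A)" using v by simp
    have "(\<Sum>i<dim_row A. \<Sum>j<dim_row A. cnj (v $ i) * mat_cnj A $$ (i, j) * v $ j)
       = cnj (\<Sum>i<dim_row A. \<Sum>j<dim_row A. cnj (?w $ i) * A $$ (i, j) * ?w $ j)"
      using v hermitian_sq[OF h] unfolding mat_cnj_def by (simp add: cnj_sum)
    then show ?thesis using q[OF w] by (simp only: cnj.sel(1))
  qed
  ultimately show ?thesis unfolding psd_def mat_cnj_def by simp
qed

lemma trace_cnj: "A \<in> carrier_mat d d \<Longrightarrow> trace_mat (mat_cnj A) = cnj (trace_mat A)"
  unfolding trace_mat_def mat_cnj_def by simp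

lemma state_cnj: assumes "is_state d A" shows "is_state d (mat_cnj A)"
proof -
  have c: "A \<in> carrier_mat d d" and p: "psd A" and t: "trace_mat A = 1"
    using assms unfolding is_state_def by auto
  show ?thesis unfolding is_state_def
    using cnj_carrier[OF c] psd_cnj[OF p] trace_cnj[OF c] t by simp
qed

lemma psd_realpart: assumes "psd A" shows "psd (mat_realpart A)"
proof -
  have h: "hermitian A" and q: "\<And>v. v \<in> carrier_vec (dim_row A) \<Longrightarrow>
        0 \<le> Re (\<Sum>i<dim_row A. \<Sum>j<dim_row A. cnj (v $ i) * A $$ (i, j) * v $ j)"
    using assms unfolding psd_def by auto
  have q2: "\<And>v. v \<in> carrier_vec (dim_row A) \<Longrightarrow>
        0 \<le> Re (\<Sum>i<dim_row A. \<Sum>j<dim_row A. cnj (v $ i) * mat_cnj A $$ (i, j) * v $ j)"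
    using psd_cnj[OF assms] unfolding psd_def by (simp add: mat_cnj_def)
  have sq: "dim_row A = dim_col A" using hermitian_sq[OF h] by simp
  have "hermitian (mat_realpart A)" using hermitian_realpart[OF h] .
  moreover have "0 \<le> Re (\<Sum>i<dim_row A. \<Sum>j<dim_row A. cnj (v $ i) * mat_realpart A $$ (i, j) * v $ j)"
    if v: "v \<in> carrier_vec (dim_row A)" for v
  proof -
    have "(\<Sum>i<dim_row A. \<Sum>j<dim_row A. cnj (v $ i) * mat_realpart A $$ (i, j) * v $ j)
       = (\<Sum>i<dim_row A. \<Sum>j<dim_row A. (cnj (v $ i) * A $$ (i, j) * v $ j + cnj (v $ i) * mat_cnj A $$ (i, j) * v $ j) / 2)"
      using sq by (intro sum.cong refl) (simp add: realpart_index mat_cnj_def field_simps)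
    also have "\<dots> = ((\<Sum>i<dim_row A. \<Sum>j<dim_row A. cnj (v $ i) * A $$ (i, j) * v $ j) +
          (\<Sum>i<dim_row A. \<Sum>j<dim_row A. cnj (v $ i) * mat_cnj A $$ (i, j) * v $ j)) / 2"
      by (simp add: sum.distrib flip: sum_divide_distrib)
    finally have e: "(\<Sum>i<dim_row A. \<Sum>j<dim_row A. cnj (v $ i) * mat_realpart A $$ (i, j) * v $ j)
       = ((\<Sum>i<dim_row A. \<Sum>j<dim_row A. cnj (v $ i) * A $$ (i, j) * v $ j) +
          (\<Sum>i<dim_row A. \<Sum>j<dim_row A. cnj (v $ i) * mat_cnj A $$ (i, j) * v $ j)) / 2" .
    show ?thesis unfolding e using q[OF v] q2[OF v] by simp
  qed
  ultimately show ?thesis unfolding psd_def mat_realpart_def mat_cnj_def by simp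
qed

lemma state_realpart: assumes "is_state d A" shows "is_state d (mat_realpart A)"
proof -
  have c: "A \<in> carrier_mat d d" and p: "psd A" and t: "trace_mat A = 1"
    using assms unfolding is_state_def by auto
  have "trace_mat (mat_realpart A) = (\<Sum>i<d. (A $$ (i,i) + cnj (A $$ (i,i))) / 2)"
    using c realpart_carrier[OF c] unfolding trace_mat_def
    by (intro sum.cong) (auto simp: realpart_index)
  also have "\<dots> = (trace_mat A + cnj (trace_mat A)) / 2"
    using c unfolding trace_mat_def
    by (simp add: sum.distrib add_divide_distrib flip: sum_divide_distrib)
  finally show ?thesis using t c p psd_realpart realpart_carrier unfolding is_state_def by auto
qed

lemma kron_cnj:
  "kron (mat_cnj A) (mat_cnj B) = mat_cnj (kron A B)"
proof (intro eq_matI)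
  fix i j assume i: "i < dim_row (mat_cnj (kron A B))" and j: "j < dim_col (mat_cnj (kron A B))"
  have i': "i < dim_row A * dim_row B" and j': "j < dim_col A * dim_col B"
    using i j by (auto simp: mat_cnj_def kron_def)
  have pb: "0 < dim_row B" "0 < dim_col B" using i' j' by (auto intro: ccontr)
  have "i div dim_row B < dim_row A" "j div dim_col B < dim_col A"
    using i' j' by (auto simp: less_mult_imp_div_less)
  moreover have "i mod dim_row B < dim_row B" "j mod dim_col B < dim_col B" using pb by auto
  ultimately show "kron (mat_cnj A) (mat_cnj B) $$ (i, j) = mat_cnj (kron A B) $$ (i, j)"
    using i' j' by (simp add: kron_def mat_cnj_def)
qed (auto simp: kron_def mat_cnj_def)

lemma kron_dims: "kron A B \<in> carrier_mat (dim_row A * dim_row B) (dim_col A * dim_col B)"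
  unfolding kron_def by simp



lemma state_herm: "is_state d A \<Longrightarrow> hermitian A"
  unfolding is_state_def psd_def by simp

lemma state_qf: "is_state d A \<Longrightarrow> v \<in> carrier_vec d \<Longrightarrow>
   0 \<le> Re (\<Sum>i<d. \<Sum>j<d. cnj (v $ i) * A $$ (i, j) * v $ j)"
  unfolding is_state_def psd_def by auto

lemma sum_two:
  fixes f :: "nat \<Rightarrow> 'a::comm_monoid_add"
  assumes "i < d" "j < d" "i \<noteq> j" "\<And>k. k < d \<Longrightarrow> k \<noteq> i \<Longrightarrow> k \<noteq> j \<Longrightarrow> f k = 0"
  shows "(\<Sum>k<d. f k) = f i + f j"
proof -
  have "(\<Sum>k<d. f k) = (\<Sum>k\<in>{i,j}. f k)"
    using assms by (intro sum.mono_neutral_right) auto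
  then show ?thesis using assms by simp
qed

lemma sum_one:
  fixes f :: "nat \<Rightarrow> 'a::comm_monoid_add"
  assumes "i < d" "\<And>k. k < d \<Longrightarrow> k \<noteq> i \<Longrightarrow> f k = 0"
  shows "(\<Sum>k<d. f k) = f i"
proof -
  have "(\<Sum>k<d. f k) = (\<Sum>k\<in>{i}. f k)"
    using assms by (intro sum.mono_neutral_right) auto
  then show ?thesis using assms by simp
qed

lemma qf_two:
  fixes u :: complex and A :: "complex mat"
  assumes "i < d" "j < d" "i \<noteq> j"
  defines "v \<equiv> vec d (\<lambda>k. if k = i then 1 else if k = j then u else 0)"
  shows "(\<Sum>a<d. \<Sum>b<d. cnj (v $ a) * A $$ (a, b) * v $ b) =
     A $$ (i, i) + A $$ (i, j) * u + cnj u * A $$ (j, i) + cnj u * A $$ (j, j) * u"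
proof -
  have inner: "(\<Sum>b<d. cnj (v $ a) * A $$ (a, b) * v $ b) =
      cnj (v $ a) * A $$ (a, i) + cnj (v $ a) * A $$ (a, j) * u" if "a < d" for a
    using assms by (subst sum_two[of i d j]) (auto simp: v_def)
  have "(\<Sum>a<d. \<Sum>b<d. cnj (v $ a) * A $$ (a, b) * v $ b) =
     (\<Sum>a<d. cnj (v $ a) * A $$ (a, i) + cnj (v $ a) * A $$ (a, j) * u)"
    using inner by simp
  also have "\<dots> = A $$ (i, i) + A $$ (i, j) * u + (cnj u * A $$ (j, i) + cnj u * A $$ (j, j) * u)"
    using assms by (subst sum_two[of i d j]) (auto simp: v_def)
  finally show ?thesis by (simp add: algebra_simps)
qed

lemma qf_one:
  fixes A :: "complex mat"
  assumes "i < d"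
  defines "v \<equiv> vec d (\<lambda>k. if k = i then 1 else 0)"
  shows "(\<Sum>a<d. \<Sum>b<d. cnj (v $ a) * A $$ (a, b) * v $ b) = A $$ (i, i)"
proof -
  have inner: "(\<Sum>b<d. cnj (v $ a) * A $$ (a, b) * v $ b) = cnj (v $ a) * A $$ (a, i)" if "a < d" for a
    using assms that by (subst sum_one[of i d]) (auto simp: v_def)
  have "(\<Sum>a<d. \<Sum>b<d. cnj (v $ a) * A $$ (a, b) * v $ b) = (\<Sum>a<d. cnj (v $ a) * A $$ (a, i))"
    using inner by simp
  also have "\<dots> = A $$ (i, i)"
    using assms by (subst sum_one[of i d]) (auto simp: v_def)
  finally show ?thesis .
qed

lemma state_diag:
  assumes "is_state d A" "i < d"
  shows "Im (A $$ (i, i)) = 0" "0 \<le> Re (A $$ (i, i))" "Re (A $$ (i, i)) \<le> 1"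
proof -
  have c: "A \<in> carrier_mat d d" using assms unfolding is_state_def by auto
  have "A $$ (i, i) = cnj (A $$ (i, i))" using hermitianD[OF state_herm[OF assms(1)], of i i] c assms(2) by simp
  then show "Im (A $$ (i, i)) = 0" by (metis cnj.sel(2) equation_minus_iff neg_equal_zero)
  have dg: "0 \<le> Re (A $$ (k, k))" if "k < d" for k
  proof -
    have "0 \<le> Re (\<Sum>a<d. \<Sum>b<d. cnj (vec d (\<lambda>j. if j = k then 1 else 0) $ a) * A $$ (a, b) * vec d (\<lambda>j. if j = k then 1 else 0) $ b)"
      by (rule state_qf[OF assms(1)]) simp
    then show ?thesis by (simp only: qf_one[OF that, of A])
  qed
  then show "0 \<le> Re (A $$ (i, i))" using assms(2) .
  have "1 = Re (trace_mat A)" using assms unfolding is_state_def by simp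
  also have "\<dots> = (\<Sum>k<d. Re (A $$ (k, k)))" using c unfolding trace_mat_def by (simp add: Re_sum)
  finally have s: "(\<Sum>k<d. Re (A $$ (k, k))) = 1" by simp
  have "Re (A $$ (i, i)) \<le> (\<Sum>k<d. Re (A $$ (k, k)))"
    using assms(2) dg by (intro member_le_sum) auto
  then show "Re (A $$ (i, i)) \<le> 1" using s by simp
qed

lemma state_bound:
  assumes "is_state d A" "i < d" "j < d"
  shows "cmod (A $$ (i, j)) \<le> 2"
proof (cases "i = j")
  case True
  then show ?thesis using state_diag[OF assms(1,2)] by (simp add: cmod_def)
next
  case False
  have c: "A \<in> carrier_mat d d" using assms unfolding is_state_def by auto
  have hj: "A $$ (j, i) = cnj (A $$ (i, j))" using hermitianD[OF state_herm[OF assms(1)], of j i] c assms by simp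
  have q: "0 \<le> Re (A $$ (i, i) + A $$ (i, j) * u + cnj u * A $$ (j, i) + cnj u * A $$ (j, j) * u)" for u
  proof -
    have "0 \<le> Re (\<Sum>a<d. \<Sum>b<d. cnj (vec d (\<lambda>k. if k = i then 1 else if k = j then u else 0) $ a) * A $$ (a, b) * vec d (\<lambda>k. if k = i then 1 else if k = j then u else 0) $ b)"
      by (rule state_qf[OF assms(1)]) simp
    then show ?thesis by (simp only: qf_two[OF assms(2,3) False, of u A])
  qed
  have di: "0 \<le> Re (A $$ (i, i))" "Re (A $$ (i, i)) \<le> 1" "Im (A $$ (i, i)) = 0" using state_diag[OF assms(1,2)] by auto
  have dj: "0 \<le> Re (A $$ (j, j))" "Re (A $$ (j, j)) \<le> 1" "Im (A $$ (j, j)) = 0" using state_diag[OF assms(1,3)] by auto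
  have "0 \<le> Re (A $$ (i, i)) + Re (A $$ (j, j)) + 2 * Re (A $$ (i, j))" using q[of 1] hj by simp
  moreover have "0 \<le> Re (A $$ (i, i)) + Re (A $$ (j, j)) - 2 * Re (A $$ (i, j))" using q[of "-1"] hj by simp
  moreover have "0 \<le> Re (A $$ (i, i)) + Re (A $$ (j, j)) - 2 * Im (A $$ (i, j))" using q[of "\<i>"] hj by simp
  moreover have "0 \<le> Re (A $$ (i, i)) + Re (A $$ (j, j)) + 2 * Im (A $$ (i, j))" using q[of "-\<i>"] hj by simp
  ultimately have "\<bar>Re (A $$ (i, j))\<bar> \<le> 1" "\<bar>Im (A $$ (i, j))\<bar> \<le> 1" using di dj by auto
  then show ?thesis using cmod_le[of "A $$ (i, j)"] by linarith
qed

lemma sum_div_mod: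
  fixes f :: "nat \<Rightarrow> nat \<Rightarrow> 'a::comm_monoid_add"
  shows "(\<Sum>r<m * n. f (r div n) (r mod n)) = (\<Sum>i<m. \<Sum>j<n. f i j)"
proof (induct m)
  case 0 then show ?case by simp
next
  case (Suc m)
  have split: "(\<Sum>r<k + n. g r) = (\<Sum>r<k. g r) + (\<Sum>j<n. g (k + j))" for k and g :: "nat \<Rightarrow> 'a"
    by (induct n) (auto simp: add.assoc)
  have "(\<Sum>r<Suc m * n. f (r div n) (r mod n)) = (\<Sum>r<m * n. f (r div n) (r mod n)) + (\<Sum>j<n. f ((m * n + j) div n) ((m * n + j) mod n))"
    using split[where k = "m * n"] by (simp add: add.commute)
  also have "(\<Sum>j<n. f ((m * n + j) div n) ((m * n + j) mod n)) = (\<Sum>j<n. f m j)"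
    by (intro sum.cong) auto
  finally show ?case using Suc by simp
qed

lemma trace_kron:
  assumes "A \<in> carrier_mat m m" "B \<in> carrier_mat n n"
  shows "trace_mat (kron A B) = trace_mat A * trace_mat B"
proof -
  have "trace_mat (kron A B) = (\<Sum>r<m * n. A $$ (r div n, r div n) * B $$ (r mod n, r mod n))"
    using assms unfolding trace_mat_def kron_def by simp
  also have "\<dots> = (\<Sum>i<m. \<Sum>j<n. A $$ (i, i) * B $$ (j, j))"
    by (rule sum_div_mod[of "\<lambda>i j. A $$ (i, i) * B $$ (j, j)"])
  also have "\<dots> = trace_mat A * trace_mat B"
    using assms unfolding trace_mat_def by (simp add: sum_product)
  finally show ?thesis .
qed

lemma kron_index:
  assumes "A \<in> carrier_mat m m" "B \<in> carrier_mat n n" "r < m * n" "c < m * n"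
  shows "kron A B $$ (r, c) = A $$ (r div n, c div n) * B $$ (r mod n, c mod n)"
  using assms unfolding kron_def by simp

lemma kron_herm:
  assumes "is_state m A" "is_state n B" "r < m * n" "c < m * n"
  shows "kron A B $$ (r, c) = cnj (kron A B $$ (c, r))"
proof -
  have cA: "A \<in> carrier_mat m m" and cB: "B \<in> carrier_mat n n" using assms unfolding is_state_def by auto
  have n: "0 < n" using assms(3) by (cases n) auto
  have "r div n < m" "c div n < m" using assms(3,4) by (auto simp: less_mult_imp_div_less)
  moreover have "r mod n < n" "c mod n < n" using n by auto
  ultimately show ?thesis
    using hermitianD[OF state_herm[OF assms(1)], of "r div n" "c div n"]
      hermitianD[OF state_herm[OF assms(2)], of "r mod n" "c mod n"] cA cB assms(3,4)
    by (simp add: kron_index[OF cA cB])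
qed

definition e00 :: "nat \<Rightarrow> complex mat" where
  "e00 d = mat d d (\<lambda>(i, j). if i = 0 \<and> j = 0 then 1 else 0)"

lemma e00_state: assumes "0 < d" shows "is_state d (e00 d)"
proof -
  have c: "e00 d \<in> carrier_mat d d" by (simp add: e00_def)
  have h: "hermitian (e00 d)" unfolding hermitian_def e00_def by auto
  have q: "0 \<le> Re (\<Sum>i<d. \<Sum>j<d. cnj (v $ i) * e00 d $$ (i, j) * v $ j)" for v :: "complex vec"
  proof -
    have "(\<Sum>i<d. \<Sum>j<d. cnj (v $ i) * e00 d $$ (i, j) * v $ j) = cnj (v $ 0) * v $ 0"
    proof -
      have "(\<Sum>i<d. \<Sum>j<d. cnj (v $ i) * e00 d $$ (i, j) * v $ j) = (\<Sum>i<d. \<Sum>j<d. if i = 0 \<and> j = 0 then cnj (v $ i) * v $ j else 0)"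
        by (intro sum.cong) (auto simp: e00_def)
      also have "\<dots> = (\<Sum>j<d. if (0::nat) = 0 \<and> j = 0 then cnj (v $ 0) * v $ j else 0)"
        using assms by (intro sum_one) auto
      also have "\<dots> = cnj (v $ 0) * v $ 0"
        using assms by (subst sum_one[of 0 d]) auto
      finally show ?thesis .
    qed
    moreover have "0 \<le> Re (cnj z * z)" for z :: complex by simp
    ultimately show ?thesis by simp
  qed
  have "trace_mat (e00 d) = 1"
    unfolding trace_mat_def e00_def using assms by (simp add: sum.delta' cong: if_cong)
  then show ?thesis using c h q unfolding is_state_def psd_def by (simp add: e00_def)
qed



lemma lin_dep:
  fixes w :: "'i \<Rightarrow> 'j \<Rightarrow> real"
  assumes "finite J" "finite I" "card J < card I"
  shows "\<exists>c. (\<exists>k\<in>I. c k \<noteq> 0) \<and> (\<forall>j\<in>J. (\<Sum>k\<in>I. c k * w k j) = 0)"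
  using assms
proof (induct J arbitrary: I w rule: finite_induct)
  case empty
  then have "I \<noteq> {}" by auto
  then show ?case by (intro exI[of _ "\<lambda>_. 1"]) auto
next
  case (insert j0 J)
  show ?case
  proof (cases "\<forall>k\<in>I. w k j0 = 0")
    case True
    have "card J < card I" using insert by simp
    from insert(3)[OF insert(4) this, of w] obtain c where
      c: "\<exists>k\<in>I. c k \<noteq> 0" "\<forall>j\<in>J. (\<Sum>k\<in>I. c k * w k j) = 0" by blast
    then show ?thesis using True by (intro exI[of _ c]) auto
  next
    case False
    then obtain k0 where k0: "k0 \<in> I" "w k0 j0 \<noteq> 0" by blast
    define a where "a = w k0 j0"
    define I' where "I' = I - {k0}"
    define w' where "w' k j = w k j - (w k j0 / a) * w k0 j" for k j
    have fI': "finite I'" using insert(4) by (simp add: I'_def)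
    have cI': "card J < card I'" using insert(1,2,4,5) k0(1) by (simp add: I'_def card_Diff_singleton)
    from insert(3)[OF fI' cI', of w'] obtain c' where
      c': "\<exists>k\<in>I'. c' k \<noteq> 0" "\<forall>j\<in>J. (\<Sum>k\<in>I'. c' k * w' k j) = 0" by blast
    define S where "S = (\<Sum>k\<in>I'. c' k * w k j0)"
    define c where "c k = (if k = k0 then - S / a else c' k)" for k
    have ck0: "k0 \<notin> I'" by (simp add: I'_def)
    have sumI: "(\<Sum>k\<in>I. c k * w k j) = c k0 * w k0 j + (\<Sum>k\<in>I'. c' k * w k j)" for j
    proof -
      have "(\<Sum>k\<in>I. c k * w k j) = c k0 * w k0 j + (\<Sum>k\<in>I'. c k * w k j)"
        unfolding I'_def using insert(4) k0(1) by (rule sum.remove)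
      moreover have "(\<Sum>k\<in>I'. c k * w k j) = (\<Sum>k\<in>I'. c' k * w k j)"
        using ck0 by (intro sum.cong) (auto simp: c_def)
      ultimately show ?thesis by simp
    qed
    have "\<forall>j\<in>insert j0 J. (\<Sum>k\<in>I. c k * w k j) = 0"
    proof
      fix j assume j: "j \<in> insert j0 J"
      show "(\<Sum>k\<in>I. c k * w k j) = 0"
      proof (cases "j = j0")
        case True
        then show ?thesis using sumI[of j0] k0 by (simp add: c_def S_def a_def)
      next
        case False
        then have jJ: "j \<in> J" using j by simp
        have "0 = (\<Sum>k\<in>I'. c' k * w' k j)" using c'(2) jJ by simp
        also have "\<dots> = (\<Sum>k\<in>I'. c' k * w k j) - S / a * w k0 j"
          unfolding w'_def S_def
          by (simp add: right_diff_distrib sum_subtractf sum_distrib_right sum_divide_distrib mult.assoc)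
        finally show ?thesis using sumI[of j] by (simp add: c_def)
      qed
    qed
    moreover have "\<exists>k\<in>I. c k \<noteq> 0" using c'(1) ck0 by (auto simp: c_def I'_def)
    ultimately show ?thesis by blast
  qed
qed

lemma carath_step:
  fixes v :: "'i \<Rightarrow> 'j \<Rightarrow> real"
  assumes fI: "finite I" and fJ: "finite J" and card: "card J + 1 < card I"
    and p0: "\<forall>k\<in>I. 0 \<le> p k" and p1: "sum p I = 1"
  shows "\<exists>k0\<in>I. \<exists>p'. (\<forall>k\<in>I - {k0}. 0 \<le> p' k) \<and> sum p' (I - {k0}) = 1 \<and>
      (\<forall>j\<in>J. (\<Sum>k\<in>I - {k0}. p' k * v k j) = (\<Sum>k\<in>I. p k * v k j))"
proof -
  define w where "w k jj = (case jj of None \<Rightarrow> 1 | Some j \<Rightarrow> v k j)" for k jj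
  have cJ': "card (insert None (Some ` J)) = card J + 1"
    using fJ by (simp add: card_image)
  obtain c where c: "\<exists>k\<in>I. c k \<noteq> 0" "\<forall>jj\<in>insert None (Some ` J). (\<Sum>k\<in>I. c k * w k jj) = 0"
    using lin_dep[of "insert None (Some ` J)" I w] fI fJ card cJ' by auto
  have csum: "(\<Sum>k\<in>I. c k) = 0" using c(2) by (auto simp: w_def)
  have cv: "(\<Sum>k\<in>I. c k * v k j) = 0" if "j \<in> J" for j using c(2) that by (auto simp: w_def)
  have "\<exists>k\<in>I. 0 < c k"
  proof (rule ccontr)
    assume "\<not> ?thesis"
    then have "\<forall>k\<in>I. c k \<le> 0" by auto
    then have "\<forall>k\<in>I. - c k = 0" using sum_nonneg_eq_0_iff[OF fI, of "\<lambda>k. - c k"] csum by (simp add: sum_negf)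
    then show False using c(1) by auto
  qed
  define P where "P = {k\<in>I. 0 < c k}"
  have fP: "finite P" "P \<noteq> {}" using fI \<open>\<exists>k\<in>I. 0 < c k\<close> by (auto simp: P_def)
  define t where "t = Min ((\<lambda>k. p k / c k) ` P)"
  have "t \<in> (\<lambda>k. p k / c k) ` P" unfolding t_def using fP by (intro Min_in) auto
  then obtain k0 where k0: "k0 \<in> P" "t = p k0 / c k0" by auto
  have tle: "t \<le> p k / c k" if "k \<in> P" for k
    unfolding t_def using fP that by (intro Min_le) auto
  have t0: "0 \<le> t" using k0 p0 by (auto simp: P_def)
  define p' where "p' k = p k - t * c k" for k
  have p'0: "0 \<le> p' k" if "k \<in> I" for k
  proof (cases "0 < c k")
    case True
    then have "t \<le> p k / c k" using tle that by (auto simp: P_def)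
    then have "t * c k \<le> p k" using True by (simp add: pos_le_divide_eq)
    then show ?thesis by (simp add: p'_def)
  next
    case False
    then have "t * c k \<le> 0" using t0 by (simp add: mult_nonneg_nonpos)
    moreover have "0 \<le> p k" using p0 that by blast
    ultimately show ?thesis by (simp add: p'_def)
  qed
  have pk0: "p' k0 = 0" using k0 by (simp add: p'_def P_def)
  have k0I: "k0 \<in> I" using k0 by (simp add: P_def)
  have s1: "sum p' I = 1" using p1 csum by (simp add: p'_def sum_subtractf flip: sum_distrib_left)
  have s1': "sum p' (I - {k0}) = 1" using s1 sum.remove[OF fI k0I, of p'] pk0 by simp
  have sv: "(\<Sum>k\<in>I - {k0}. p' k * v k j) = (\<Sum>k\<in>I. p k * v k j)" if "j \<in> J" for j
  proof -
    have "(\<Sum>k\<in>I. p' k * v k j) = (\<Sum>k\<in>I. p k * v k j) - t * (\<Sum>k\<in>I. c k * v k j)"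
      by (simp add: p'_def left_diff_distrib sum_subtractf sum_distrib_left mult.assoc)
    then have "(\<Sum>k\<in>I. p' k * v k j) = (\<Sum>k\<in>I. p k * v k j)" using cv[OF that] by simp
    then show ?thesis using sum.remove[OF fI k0I, of "\<lambda>k. p' k * v k j"] pk0 by simp
  qed
  show ?thesis using k0I p'0 s1' sv by blast
qed

lemma carath:
  fixes v :: "'i \<Rightarrow> 'j \<Rightarrow> real"
  assumes "finite I" "finite J" "\<forall>k\<in>I. 0 \<le> p k" "sum p I = 1"
  shows "\<exists>I' p'. I' \<subseteq> I \<and> card I' \<le> card J + 1 \<and> (\<forall>k\<in>I'. 0 \<le> p' k) \<and> sum p' I' = 1 \<and>
      (\<forall>j\<in>J. (\<Sum>k\<in>I'. p' k * v k j) = (\<Sum>k\<in>I. p k * v k j))"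
  using assms
proof (induct "card I" arbitrary: I p rule: less_induct)
  case less
  show ?case
  proof (cases "card I \<le> card J + 1")
    case True
    then show ?thesis using less.prems by (intro exI[of _ I] exI[of _ p]) auto
  next
    case False
    then obtain k0 p' where k0: "k0 \<in> I" and p': "\<forall>k\<in>I - {k0}. 0 \<le> p' k" "sum p' (I - {k0}) = 1"
      "\<forall>j\<in>J. (\<Sum>k\<in>I - {k0}. p' k * v k j) = (\<Sum>k\<in>I. p k * v k j)"
      using carath_step[of I J p v] less.prems by auto
    have "card (I - {k0}) < card I" using k0 less.prems(1) by (rule card_Diff1_less[rotated])
    from less.hyps[OF this _ less.prems(2) p'(1,2)] less.prems(1) obtain I' p'' where
      "I' \<subseteq> I - {k0}" "card I' \<le> card J + 1" "\<forall>k\<in>I'. 0 \<le> p'' k" "sum p'' I' = 1"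
      "\<forall>j\<in>J. (\<Sum>k\<in>I'. p'' k * v k j) = (\<Sum>k\<in>I - {k0}. p' k * v k j)" by auto
    then show ?thesis using p'(3) by (intro exI[of _ I'] exI[of _ p'']) auto
  qed
qed



definition cmb :: "nat \<Rightarrow> nat \<Rightarrow> nat \<Rightarrow> (nat \<Rightarrow> real) \<Rightarrow> (nat \<Rightarrow> complex mat) \<Rightarrow> (nat \<Rightarrow> complex mat) \<Rightarrow> complex mat" where
  "cmb m n K p A B = mat (m * n) (m * n) (\<lambda>(r, c). \<Sum>k<K. complex_of_real (p k) * kron (A k) (B k) $$ (r, c))"

definition valid :: "nat \<Rightarrow> nat \<Rightarrow> nat \<Rightarrow> (nat \<Rightarrow> real) \<Rightarrow> (nat \<Rightarrow> complex mat) \<Rightarrow> (nat \<Rightarrow> complex mat) \<Rightarrow> bool" where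
  "valid m n K p A B \<longleftrightarrow> (\<forall>k<K. 0 \<le> p k \<and> is_state m (A k) \<and> is_state n (B k)) \<and> (\<Sum>k<K. p k) = 1"

definition K0 :: "nat \<Rightarrow> nat \<Rightarrow> nat" where
  "K0 m n = card ({..<m * n} \<times> {..<m * n} \<times> (UNIV :: bool set)) + 1"

lemma cmb_carrier: "cmb m n K p A B \<in> carrier_mat (m * n) (m * n)"
  by (simp add: cmb_def)

lemma cmb_index: "r < m * n \<Longrightarrow> c < m * n \<Longrightarrow>
   cmb m n K p A B $$ (r, c) = (\<Sum>k<K. complex_of_real (p k) * kron (A k) (B k) $$ (r, c))"
  by (simp add: cmb_def)

lemma sep_iff: "separable m n \<sigma> \<longleftrightarrow> (\<exists>K p A B. valid m n K p A B \<and> \<sigma> = cmb m n K p A B)"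
proof
  assume "separable m n \<sigma>"
  then obtain K p A B where c: "\<sigma> \<in> carrier_mat (m * n) (m * n)" and v: "valid m n K p A B"
    and e: "\<forall>r < m * n. \<forall>c < m * n. \<sigma> $$ (r, c) = (\<Sum>k<K. complex_of_real (p k) * kron (A k) (B k) $$ (r, c))"
    unfolding separable_def valid_def by blast
  have "\<sigma> = cmb m n K p A B" using c e by (intro eq_matI) (auto simp: cmb_def)
  then show "\<exists>K p A B. valid m n K p A B \<and> \<sigma> = cmb m n K p A B" using v by blast
next
  assume "\<exists>K p A B. valid m n K p A B \<and> \<sigma> = cmb m n K p A B"
  then obtain K p A B where v: "valid m n K p A B" and e: "\<sigma> = cmb m n K p A B" by blast
  have ent: "\<forall>r<m * n. \<forall>c<m * n. \<sigma> $$ (r, c) = (\<Sum>k<K. complex_of_real (p k) * kron (A k) (B k) $$ (r, c))"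
    using e by (simp add: cmb_index)
  have car: "\<sigma> \<in> carrier_mat (m * n) (m * n)" using e by (simp add: cmb_def)
  show "separable m n \<sigma>" unfolding separable_def using v ent car unfolding valid_def by blast
qed

lemma Re_ofr: "Re (complex_of_real a * z) = a * Re z" and Im_ofr: "Im (complex_of_real a * z) = a * Im z"
  by simp_all

lemma carath_cmb:
  assumes v: "valid m n K p A B"
  shows "\<exists>p' A' B'. valid m n (K0 m n) p' A' B' \<and> cmb m n (K0 m n) p' A' B' = cmb m n K p A B"
proof -
  define J where "J = {..<m * n} \<times> {..<m * n} \<times> (UNIV :: bool set)"
  define kr where "kr k = kron (A k) (B k)" for k
  define vv where "vv k jj = (case jj of (r, c, b) \<Rightarrow> if b then Re (kr k $$ (r, c)) else Im (kr k $$ (r, c)))" for k jj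
  have p0: "\<forall>k\<in>{..<K}. 0 \<le> p k" and p1: "sum p {..<K} = 1" using v unfolding valid_def by auto
  have fJ: "finite J" by (simp add: J_def)
  obtain I' p' where I': "I' \<subseteq> {..<K}" "card I' \<le> card J + 1" "\<forall>k\<in>I'. 0 \<le> p' k" "sum p' I' = 1"
    "\<forall>j\<in>J. (\<Sum>k\<in>I'. p' k * vv k j) = (\<Sum>k\<in>{..<K}. p k * vv k j)"
    using carath[OF _ fJ p0 p1, of vv] by auto
  have fI': "finite I'" using I'(1) finite_subset by blast
  define q where "q = card I'"
  obtain h where h: "bij_betw h {0..<q} I'" using ex_bij_betw_nat_finite[OF fI'] unfolding q_def by blast
  have hI: "k < q \<Longrightarrow> h k \<in> I'" for k using h by (auto simp: bij_betw_def)
  have qK: "q \<le> K0 m n" using I'(2) by (simp add: q_def K0_def J_def)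
  have K: "0 < K" using p1 by (cases K) auto
  define p'' where "p'' k = (if k < q then p' (h k) else 0)" for k
  define A'' where "A'' k = (if k < q then A (h k) else A 0)" for k
  define B'' where "B'' k = (if k < q then B (h k) else B 0)" for k
  have reidx: "(\<Sum>k<K0 m n. if k < q then g (h k) else 0) = (\<Sum>i\<in>I'. g i)" for g :: "nat \<Rightarrow> 'z::comm_monoid_add"
  proof -
    have "(\<Sum>k<K0 m n. if k < q then g (h k) else 0) = (\<Sum>k\<in>{k\<in>{..<K0 m n}. k < q}. g (h k))"
      by (rule sum.inter_filter[symmetric]) simp
    also have "{k\<in>{..<K0 m n}. k < q} = {0..<q}" using qK by auto
    also have "(\<Sum>k\<in>{0..<q}. g (h k)) = (\<Sum>i\<in>I'. g i)" by (rule sum.reindex_bij_betw[OF h])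
    finally show ?thesis .
  qed
  have "valid m n (K0 m n) p'' A'' B''"
    unfolding valid_def
  proof (intro conjI allI impI)
    fix k assume "k < K0 m n"
    show "0 \<le> p'' k" using I'(3) hI by (simp add: p''_def)
    show "is_state m (A'' k)" using v hI I'(1) K unfolding valid_def A''_def by auto
    show "is_state n (B'' k)" using v hI I'(1) K unfolding valid_def B''_def by auto
  next
    have "(\<Sum>k<K0 m n. p'' k) = (\<Sum>i\<in>I'. p' i)" unfolding p''_def by (rule reidx)
    then show "(\<Sum>k<K0 m n. p'' k) = 1" using I'(4) by simp
  qed
  moreover have "cmb m n (K0 m n) p'' A'' B'' = cmb m n K p A B"
  proof (intro eq_matI)
    fix r c assume "r < dim_row (cmb m n K p A B)" "c < dim_col (cmb m n K p A B)"
    then have rc: "r < m * n" "c < m * n" by (auto simp: cmb_def)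
    have "cmb m n (K0 m n) p'' A'' B'' $$ (r, c) =
        (\<Sum>k<K0 m n. if k < q then complex_of_real (p' (h k)) * kr (h k) $$ (r, c) else 0)"
      using rc by (auto simp: cmb_index p''_def A''_def B''_def kr_def intro!: sum.cong)
    also have "\<dots> = (\<Sum>i\<in>I'. complex_of_real (p' i) * kr i $$ (r, c))" by (rule reidx)
    also have "\<dots> = (\<Sum>k<K. complex_of_real (p k) * kr k $$ (r, c))"
    proof (rule complex_eqI)
      have j1: "(r, c, True) \<in> J" "(r, c, False) \<in> J" using rc by (auto simp: J_def)
      show "Re (\<Sum>i\<in>I'. complex_of_real (p' i) * kr i $$ (r, c)) = Re (\<Sum>k<K. complex_of_real (p k) * kr k $$ (r, c))"
        using bspec[OF I'(5) j1(1)] by (simp add: Re_sum vv_def)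
      show "Im (\<Sum>i\<in>I'. complex_of_real (p' i) * kr i $$ (r, c)) = Im (\<Sum>k<K. complex_of_real (p k) * kr k $$ (r, c))"
        using bspec[OF I'(5) j1(2)] by (simp add: Im_sum vv_def)
    qed
    also have "\<dots> = cmb m n K p A B $$ (r, c)" using rc by (simp add: cmb_index kr_def)
    finally show "cmb m n (K0 m n) p'' A'' B'' $$ (r, c) = cmb m n K p A B $$ (r, c)" .
  qed (auto simp: cmb_def)
  ultimately show ?thesis by blast
qed

lemma state_carrier: "is_state d A \<Longrightarrow> A \<in> carrier_mat d d"
  unfolding is_state_def by simp

lemma trace_cmb:
  assumes v: "valid m n K p A B"
  shows "trace_mat (cmb m n K p A B) = 1"
proof -
  have "trace_mat (cmb m n K p A B) = (\<Sum>r<m * n. \<Sum>k<K. complex_of_real (p k) * kron (A k) (B k) $$ (r, r))"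
    unfolding trace_mat_def by (simp add: cmb_def)
  also have "\<dots> = (\<Sum>k<K. \<Sum>r<m * n. complex_of_real (p k) * kron (A k) (B k) $$ (r, r))"
    by (rule sum.swap)
  also have "\<dots> = (\<Sum>k<K. complex_of_real (p k) * trace_mat (kron (A k) (B k)))"
  proof (intro sum.cong refl)
    fix k assume "k \<in> {..<K}"
    then have "A k \<in> carrier_mat m m" "B k \<in> carrier_mat n n" using v unfolding valid_def
      by (auto intro: state_carrier)
    then show "(\<Sum>r<m * n. complex_of_real (p k) * kron (A k) (B k) $$ (r, r)) = complex_of_real (p k) * trace_mat (kron (A k) (B k))"
      by (simp add: trace_mat_def kron_def sum_distrib_left)
  qed
  also have "\<dots> = (\<Sum>k<K. complex_of_real (p k))"
  proof (intro sum.cong refl)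
    fix k assume "k \<in> {..<K}"
    then have s: "is_state m (A k)" "is_state n (B k)" using v unfolding valid_def by auto
    then have "trace_mat (kron (A k) (B k)) = trace_mat (A k) * trace_mat (B k)" by (intro trace_kron state_carrier)
    then show "complex_of_real (p k) * trace_mat (kron (A k) (B k)) = complex_of_real (p k)"
      using s unfolding is_state_def by simp
  qed
  also have "\<dots> = 1" using v unfolding valid_def by (metis of_real_1 of_real_sum)
  finally show ?thesis .
qed

lemma herm_cmb:
  assumes v: "valid m n K p A B" and rc: "r < m * n" "c < m * n"
  shows "cmb m n K p A B $$ (r, c) = cnj (cmb m n K p A B $$ (c, r))"
proof -
  have "cmb m n K p A B $$ (r, c) = (\<Sum>k<K. complex_of_real (p k) * cnj (kron (A k) (B k) $$ (c, r)))"
    using rc v unfolding valid_def by (auto simp: cmb_index intro!: sum.cong kron_herm)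
  then show ?thesis using rc by (simp add: cmb_index)
qed



lemma bw:
  fixes X :: "nat \<Rightarrow> 'j \<Rightarrow> real"
  assumes "finite J" "\<forall>j\<in>J. \<forall>n. \<bar>X n j\<bar> \<le> M"
  shows "\<exists>r L. strict_mono r \<and> (\<forall>j\<in>J. (\<lambda>n. X (r n) j) \<longlonglongrightarrow> L j)"
  using assms
proof (induct J rule: finite_induct)
  case empty
  show ?case by (intro exI[of _ id]) (auto simp: strict_mono_def)
next
  case (insert j0 J)
  then obtain r L where r: "strict_mono r" "\<forall>j\<in>J. (\<lambda>n. X (r n) j) \<longlonglongrightarrow> L j" by auto
  obtain f where f: "strict_mono f" "monoseq (\<lambda>n. X (r (f n)) j0)"
    using seq_monosub[of "\<lambda>n. X (r n) j0"] by (auto simp: o_def)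
  have "Bseq (\<lambda>n. X (r (f n)) j0)"
    using insert(4) by (intro BseqI'[of _ M]) auto
  then have "convergent (\<lambda>n. X (r (f n)) j0)" using f(2) Bseq_monoseq_convergent by blast
  then obtain l where l: "(\<lambda>n. X (r (f n)) j0) \<longlonglongrightarrow> l" by (auto simp: convergent_def)
  have sm: "strict_mono (r \<circ> f)" using r(1) f(1) by (simp add: strict_mono_def)
  have "\<forall>j\<in>insert j0 J. (\<lambda>n. X ((r \<circ> f) n) j) \<longlonglongrightarrow> (L(j0 := l)) j"
  proof
    fix j assume j: "j \<in> insert j0 J"
    show "(\<lambda>n. X ((r \<circ> f) n) j) \<longlonglongrightarrow> (L(j0 := l)) j"
    proof (cases "j = j0")
      case True then show ?thesis using l by simp
    next
      case False
      then have "j \<in> J" using j by simp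
      then have "(\<lambda>n. X (r n) j) \<longlonglongrightarrow> L j" using r(2) by blast
      from LIMSEQ_subseq_LIMSEQ[OF this f(1)] show ?thesis using False by (simp add: o_def)
    qed
  qed
  then show ?case using sm by blast
qed

lemma state_limit:
  assumes s: "\<And>k. is_state d (S k)" and lim: "\<And>i j. i < d \<Longrightarrow> j < d \<Longrightarrow> (\<lambda>k. S k $$ (i, j)) \<longlonglongrightarrow> L i j"
  shows "is_state d (mat d d (\<lambda>(i, j). L i j))"
proof -
  let ?M = "mat d d (\<lambda>(i, j). L i j)"
  have c: "\<And>k. S k \<in> carrier_mat d d" using s by (rule state_carrier)
  have herm: "hermitian ?M" unfolding hermitian_def
  proof (intro conjI allI impI)
    fix i j assume ij: "i < dim_row ?M" "j < dim_row ?M"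
    then have ij': "i < d" "j < d" by auto
    have "(\<lambda>k. S k $$ (i, j)) \<longlonglongrightarrow> cnj (L j i)"
    proof -
      have "(\<lambda>k. cnj (S k $$ (j, i))) \<longlonglongrightarrow> cnj (L j i)" using lim[OF ij'(2,1)] by (rule tendsto_cnj)
      moreover have "cnj (S k $$ (j, i)) = S k $$ (i, j)" for k
        using hermitianD[OF state_herm[OF s[of k]], of i j] c[of k] ij' by simp
      ultimately show ?thesis by simp
    qed
    then have "L i j = cnj (L j i)" using lim[OF ij'] LIMSEQ_unique by blast
    then show "?M $$ (i, j) = cnj (?M $$ (j, i))" using ij' by simp
  qed simp
  have psd: "0 \<le> Re (\<Sum>i<d. \<Sum>j<d. cnj (v $ i) * ?M $$ (i, j) * v $ j)" if v: "v \<in> carrier_vec d" for v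
  proof -
    have "(\<lambda>k. Re (\<Sum>i<d. \<Sum>j<d. cnj (v $ i) * S k $$ (i, j) * v $ j)) \<longlonglongrightarrow>
        Re (\<Sum>i<d. \<Sum>j<d. cnj (v $ i) * L i j * v $ j)"
      by (intro tendsto_intros lim) auto
    moreover have "\<forall>k. 0 \<le> Re (\<Sum>i<d. \<Sum>j<d. cnj (v $ i) * S k $$ (i, j) * v $ j)"
      using state_qf[OF s v] by blast
    ultimately have "0 \<le> Re (\<Sum>i<d. \<Sum>j<d. cnj (v $ i) * L i j * v $ j)"
      by (intro LIMSEQ_le_const) auto
    moreover have "(\<Sum>i<d. \<Sum>j<d. cnj (v $ i) * ?M $$ (i, j) * v $ j) = (\<Sum>i<d. \<Sum>j<d. cnj (v $ i) * L i j * v $ j)"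
      by (intro sum.cong) auto
    ultimately show ?thesis by simp
  qed
  have tr: "trace_mat ?M = 1"
  proof -
    have "(\<lambda>k. \<Sum>i<d. S k $$ (i, i)) \<longlonglongrightarrow> (\<Sum>i<d. L i i)" by (intro tendsto_intros lim) auto
    moreover have "(\<lambda>k. \<Sum>i<d. S k $$ (i, i)) = (\<lambda>k. 1)"
    proof
      fix k
      have "trace_mat (S k) = 1" "dim_row (S k) = d" using s[of k] c[of k] unfolding is_state_def by auto
      then show "(\<Sum>i<d. S k $$ (i, i)) = 1" unfolding trace_mat_def by simp
    qed
    ultimately have "(\<lambda>k. 1) \<longlonglongrightarrow> (\<Sum>i<d. L i i)" by simp
    then have "(\<Sum>i<d. L i i) = 1" using LIMSEQ_unique[OF tendsto_const] by metis
    then show ?thesis unfolding trace_mat_def by simp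
  qed
  show ?thesis unfolding is_state_def psd_def using herm psd tr by auto
qed

lemma cmod_expand:
  "(cmod (u + complex_of_real t * w))\<^sup>2 = (cmod u)\<^sup>2 + 2 * t * Re (cnj u * w) + t\<^sup>2 * (cmod w)\<^sup>2"
  by (simp only: cmod_power2) (simp add: power2_eq_square algebra_simps)

lemma Re_cnj_self: "Re (cnj u * u) = (cmod u)\<^sup>2"
  by (simp only: cmod_power2) (simp add: power2_eq_square)

definition dist2 :: "nat \<Rightarrow> complex mat \<Rightarrow> complex mat \<Rightarrow> real" where
  "dist2 d X Y = (\<Sum>i<d. \<Sum>j<d. (cmod (X $$ (i, j) - Y $$ (i, j)))\<^sup>2)"

lemma cmb_kron_index:
  assumes "valid m n K p A B" "r < m * n" "c < m * n"
  shows "cmb m n K p A B $$ (r, c) = (\<Sum>k<K. complex_of_real (p k) * (A k $$ (r div n, c div n) * B k $$ (r mod n, c mod n)))"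
  using assms unfolding valid_def
  by (auto simp: cmb_index intro!: sum.cong kron_index state_carrier)

lemma cmb_tendsto:
  assumes v: "\<And>N. valid m n K (ps N) (As N) (Bs N)" and v': "valid m n K P LA LB"
    and lp: "\<And>k. k < K \<Longrightarrow> (\<lambda>N. ps N k) \<longlonglongrightarrow> P k"
    and lA: "\<And>k i j. k < K \<Longrightarrow> i < m \<Longrightarrow> j < m \<Longrightarrow> (\<lambda>N. As N k $$ (i, j)) \<longlonglongrightarrow> LA k $$ (i, j)"
    and lB: "\<And>k i j. k < K \<Longrightarrow> i < n \<Longrightarrow> j < n \<Longrightarrow> (\<lambda>N. Bs N k $$ (i, j)) \<longlonglongrightarrow> LB k $$ (i, j)"
    and rc: "r < m * n" "c < m * n"
  shows "(\<lambda>N. cmb m n K (ps N) (As N) (Bs N) $$ (r, c)) \<longlonglongrightarrow> cmb m n K P LA LB $$ (r, c)"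
proof -
  have n: "0 < n" using rc by (cases n) auto
  have dm: "r div n < m" "c div n < m" using rc by (auto simp: less_mult_imp_div_less)
  have mn: "r mod n < n" "c mod n < n" using n by auto
  have "(\<lambda>N. \<Sum>k<K. complex_of_real (ps N k) * (As N k $$ (r div n, c div n) * Bs N k $$ (r mod n, c mod n)))
     \<longlonglongrightarrow> (\<Sum>k<K. complex_of_real (P k) * (LA k $$ (r div n, c div n) * LB k $$ (r mod n, c mod n)))"
    using dm mn by (intro tendsto_intros lp lA lB) auto
  then show ?thesis using cmb_kron_index[OF v rc] cmb_kron_index[OF v' rc] by simp
qed

lemma dist2_tendsto:
  assumes "\<And>i j. i < d \<Longrightarrow> j < d \<Longrightarrow> (\<lambda>N. Y N $$ (i, j)) \<longlonglongrightarrow> Z $$ (i, j)"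
  shows "(\<lambda>N. dist2 d (Y N) X) \<longlonglongrightarrow> dist2 d Z X"
  unfolding dist2_def by (intro tendsto_intros assms) auto



lemma Re_mul_ofr: "Re (u * (complex_of_real p * w)) = p * Re (u * w)"
  by (simp add: algebra_simps)

lemma ipf_cmb:
  fixes a :: "nat \<Rightarrow> nat \<Rightarrow> complex"
  shows "(\<Sum>i<m * n. \<Sum>j<m * n. Re (cnj (a i j) * cmb m n K p A B $$ (i, j))) =
    (\<Sum>k<K. p k * (\<Sum>i<m * n. \<Sum>j<m * n. Re (cnj (a i j) * kron (A k) (B k) $$ (i, j))))"
proof -
  have "(\<Sum>i<m * n. \<Sum>j<m * n. Re (cnj (a i j) * cmb m n K p A B $$ (i, j))) =
     (\<Sum>i<m * n. \<Sum>j<m * n. \<Sum>k<K. p k * Re (cnj (a i j) * kron (A k) (B k) $$ (i, j)))"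
    by (intro sum.cong refl) (simp add: cmb_index sum_distrib_left Re_sum Re_mul_ofr, simp add: algebra_simps)
  also have "\<dots> = (\<Sum>i<m * n. \<Sum>k<K. \<Sum>j<m * n. p k * Re (cnj (a i j) * kron (A k) (B k) $$ (i, j)))"
    by (rule sum.cong[OF refl]) (rule sum.swap)
  also have "\<dots> = (\<Sum>k<K. \<Sum>i<m * n. \<Sum>j<m * n. p k * Re (cnj (a i j) * kron (A k) (B k) $$ (i, j)))"
    by (rule sum.swap)
  also have "\<dots> = (\<Sum>k<K. p k * (\<Sum>i<m * n. \<Sum>j<m * n. Re (cnj (a i j) * kron (A k) (B k) $$ (i, j))))"
    by (simp add: sum_distrib_left)
  finally show ?thesis .
qed

lemma small_t:
  fixes G H :: real
  assumes H: "0 \<le> H" and all: "\<And>t. 0 < t \<Longrightarrow> t \<le> 1 \<Longrightarrow> 0 \<le> 2 * t * G + t\<^sup>2 * H"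
  shows "0 \<le> G"
proof (rule ccontr)
  assume "\<not> 0 \<le> G"
  then have G: "G < 0" by simp
  define t where "t = min 1 (- G / (H + 1))"
  have "0 < - G / (H + 1)" using G H by (intro divide_pos_pos) auto
  then have t0: "0 < t" by (simp add: t_def)
  have t1: "t \<le> 1" by (simp add: t_def)
  have "t * H \<le> (- G / (H + 1)) * H" using H by (intro mult_right_mono) (auto simp: t_def)
  also have "\<dots> < - G"
  proof -
    have "(- G / (H + 1)) * H = - G * (H / (H + 1))" by simp
    also have "\<dots> < - G * 1" using G H by (intro mult_strict_left_mono) auto
    finally show ?thesis by simp
  qed
  finally have "2 * G + t * H < 0" using G by linarith
  then have "t * (2 * G + t * H) < 0" using t0 by (simp add: mult_pos_neg)
  moreover have "t * (2 * G + t * H) = 2 * t * G + t\<^sup>2 * H" by (simp add: power2_eq_square algebra_simps)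
  ultimately show False using all[OF t0 t1] by simp
qed



lemma dist2_nonneg: "0 \<le> dist2 d X Y"
  unfolding dist2_def by (intro sum_nonneg) auto

lemma valid_p_le1: assumes "valid m n K p A B" "k < K" shows "p k \<le> 1"
proof -
  have "p k \<le> sum p {..<K}" using assms unfolding valid_def by (intro member_le_sum) auto
  then show ?thesis using assms unfolding valid_def by simp
qed

lemma minimizer:
  assumes xs: "is_state (m * n) x"
  shows "\<exists>P LA LB. valid m n (K0 m n) P LA LB \<and>
     (\<forall>\<sigma>. separable m n \<sigma> \<longrightarrow> dist2 (m * n) (cmb m n (K0 m n) P LA LB) x \<le> dist2 (m * n) \<sigma> x)"
proof -
  define d where "d = m * n"
  define KK where "KK = K0 m n"
  have xc: "x \<in> carrier_mat d d" using xs state_carrier unfolding d_def by blast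
  have d0: "0 < d"
  proof (rule ccontr)
    assume "\<not> 0 < d"
    then have "trace_mat x = 0" using xc unfolding trace_mat_def by simp
    then show False using xs unfolding is_state_def by simp
  qed
  then have m0: "0 < m" "0 < n" by (auto simp: d_def)
  have KK0: "0 < KK" by (simp add: KK_def K0_def)
  define F where "F = {dist2 d (cmb m n KK p A B) x | p A B. valid m n KK p A B}"
  define p0 where "p0 k = (if k = (0::nat) then 1 else 0 :: real)" for k
  have v0: "valid m n KK p0 (\<lambda>_. e00 m) (\<lambda>_. e00 n)"
    unfolding valid_def p0_def using e00_state m0 KK0 by (simp add: sum.delta)
  have Fne: "F \<noteq> {}" using v0 unfolding F_def by blast
  have Fbdd: "bdd_below F" unfolding F_def bdd_below_def using dist2_nonneg by blast
  define \<delta> where "\<delta> = Inf F"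
  have lower: "\<delta> \<le> dist2 d (cmb m n KK p A B) x" if "valid m n KK p A B" for p A B
    unfolding \<delta>_def using Fbdd that by (intro cInf_lower) (auto simp: F_def)
  have sep_lower: "\<delta> \<le> dist2 d \<sigma> x" if sep: "separable m n \<sigma>" for \<sigma>
  proof -
    obtain K p A B where "valid m n K p A B" "\<sigma> = cmb m n K p A B" using sep_iff[THEN iffD1, OF sep] by blast
    then obtain p' A' B' where "valid m n KK p' A' B'" "cmb m n KK p' A' B' = \<sigma>"
      using carath_cmb unfolding KK_def by metis
    then show ?thesis using lower by metis
  qed
  have "\<forall>N. \<exists>t. valid m n KK (fst t) (fst (snd t)) (snd (snd t)) \<and>
      dist2 d (cmb m n KK (fst t) (fst (snd t)) (snd (snd t))) x < \<delta> + inverse (real (Suc N))"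
  proof
    fix N
    have "Inf F < \<delta> + inverse (real (Suc N))" unfolding \<delta>_def by simp
    then obtain y where "y \<in> F" "y < \<delta> + inverse (real (Suc N))" using cInf_less_iff[OF Fne Fbdd] by blast
    then obtain p A B where "valid m n KK p A B" "dist2 d (cmb m n KK p A B) x < \<delta> + inverse (real (Suc N))"
      unfolding F_def by blast
    then show "\<exists>t. valid m n KK (fst t) (fst (snd t)) (snd (snd t)) \<and>
      dist2 d (cmb m n KK (fst t) (fst (snd t)) (snd (snd t))) x < \<delta> + inverse (real (Suc N))"
      by (intro exI[of _ "(p, A, B)"]) simp
  qed
  then obtain T where T: "\<And>N. valid m n KK (fst (T N)) (fst (snd (T N))) (snd (snd (T N))) \<and>
      dist2 d (cmb m n KK (fst (T N)) (fst (snd (T N))) (snd (snd (T N)))) x < \<delta> + inverse (real (Suc N))"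
    using choice[of "\<lambda>N t. valid m n KK (fst t) (fst (snd t)) (snd (snd t)) \<and>
      dist2 d (cmb m n KK (fst t) (fst (snd t)) (snd (snd t))) x < \<delta> + inverse (real (Suc N))"] by blast
  define ps where "ps N = fst (T N)" for N
  define As where "As N = fst (snd (T N))" for N
  define Bs where "Bs N = snd (snd (T N))" for N
  have vN: "\<And>N. valid m n KK (ps N) (As N) (Bs N)" using T unfolding ps_def As_def Bs_def by blast
  define val where "val N = dist2 d (cmb m n KK (ps N) (As N) (Bs N)) x" for N
  have upN: "\<And>N. val N < \<delta> + inverse (real (Suc N))" using T unfolding val_def ps_def As_def Bs_def by blast
  have loN: "\<And>N. \<delta> \<le> val N" using lower vN unfolding val_def by blast
  have val_lim: "val \<longlonglongrightarrow> \<delta>"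
  proof (rule tendsto_sandwich[of "\<lambda>_. \<delta>" val sequentially "\<lambda>N. \<delta> + inverse (real (Suc N))"])
    show "\<forall>\<^sub>F N in sequentially. \<delta> \<le> val N" using loN by simp
    show "\<forall>\<^sub>F N in sequentially. val N \<le> \<delta> + inverse (real (Suc N))" using upN by (intro always_eventually allI less_imp_le)
    show "(\<lambda>_. \<delta>) \<longlonglongrightarrow> \<delta>" by simp
    have "(\<lambda>N. \<delta> + inverse (real (Suc N))) \<longlonglongrightarrow> \<delta> + 0"
      by (intro tendsto_add tendsto_const LIMSEQ_inverse_real_of_nat)
    then show "(\<lambda>N. \<delta> + inverse (real (Suc N))) \<longlonglongrightarrow> \<delta>" by simp
  qed
  define Jx where "Jx = ({0::nat} \<times> {..<KK} \<times> {0::nat} \<times> {0::nat}) \<union> ({1, 2} \<times> {..<KK} \<times> {..<m} \<times> {..<m})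
     \<union> ({3, 4} \<times> {..<KK} \<times> {..<n} \<times> {..<n})"
  define X where "X N jj = (case jj of (t :: nat, k, i, j) \<Rightarrow>
      if t = 0 then ps N k else if t = 1 then Re (As N k $$ (i, j)) else if t = 2 then Im (As N k $$ (i, j))
      else if t = 3 then Re (Bs N k $$ (i, j)) else Im (Bs N k $$ (i, j)))" for N jj
  have fJ: "finite Jx" unfolding Jx_def by simp
  have bnd: "\<forall>jj\<in>Jx. \<forall>N. \<bar>X N jj\<bar> \<le> 2"
  proof (intro ballI allI)
    fix jj N assume jj: "jj \<in> Jx"
    obtain t k i j where e: "jj = (t, k, i, j)" by (cases jj) auto
    have sA: "is_state m (As N k)" and sB: "is_state n (Bs N k)" and pk: "0 \<le> ps N k" "ps N k \<le> 1"
      if "k < KK" using vN[of N] that valid_p_le1[OF vN[of N]] unfolding valid_def by auto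
    have c: "(t = 0 \<and> k < KK) \<or> ((t = 1 \<or> t = 2) \<and> k < KK \<and> i < m \<and> j < m) \<or>
        ((t = 3 \<or> t = 4) \<and> k < KK \<and> i < n \<and> j < n)"
      using jj unfolding e Jx_def by auto
    have X: "X N jj = (if t = 0 then ps N k else if t = 1 then Re (As N k $$ (i, j)) else if t = 2 then Im (As N k $$ (i, j))
      else if t = 3 then Re (Bs N k $$ (i, j)) else Im (Bs N k $$ (i, j)))" unfolding X_def e by simp
    show "\<bar>X N jj\<bar> \<le> 2"
    proof -
      consider "t = 0" "k < KK" | "t = 1" "k < KK" "i < m" "j < m" | "t = 2" "k < KK" "i < m" "j < m"
        | "t = 3" "k < KK" "i < n" "j < n" | "t = 4" "k < KK" "i < n" "j < n" using c by blast
      then show ?thesis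
      proof cases
        case 1 then show ?thesis using pk X by simp
      next
        case 2
        have b: "cmod (As N k $$ (i, j)) \<le> 2" using 2 by (intro state_bound[OF sA]) auto
        have "X N jj = Re (As N k $$ (i, j))" using X 2 by simp
        then show ?thesis using b abs_Re_le_cmod[of "As N k $$ (i, j)"] by linarith
      next
        case 3
        have b: "cmod (As N k $$ (i, j)) \<le> 2" using 3 by (intro state_bound[OF sA]) auto
        have "X N jj = Im (As N k $$ (i, j))" using X 3 by simp
        then show ?thesis using b abs_Im_le_cmod[of "As N k $$ (i, j)"] by linarith
      next
        case 4
        have b: "cmod (Bs N k $$ (i, j)) \<le> 2" using 4 by (intro state_bound[OF sB]) auto
        have "X N jj = Re (Bs N k $$ (i, j))" using X 4 by simp
        then show ?thesis using b abs_Re_le_cmod[of "Bs N k $$ (i, j)"] by linarith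
      next
        case 5
        have b: "cmod (Bs N k $$ (i, j)) \<le> 2" using 5 by (intro state_bound[OF sB]) auto
        have "X N jj = Im (Bs N k $$ (i, j))" using X 5 by simp
        then show ?thesis using b abs_Im_le_cmod[of "Bs N k $$ (i, j)"] by linarith
      qed
    qed
  qed
  obtain r L where r: "strict_mono r" "\<forall>jj\<in>Jx. (\<lambda>N. X (r N) jj) \<longlonglongrightarrow> L jj"
    using bw[OF fJ bnd] by blast
  define P where "P k = L (0, k, 0, 0)" for k
  define LLA where "LLA k i j = Complex (L (1, k, i, j)) (L (2, k, i, j))" for k i j
  define LLB where "LLB k i j = Complex (L (3, k, i, j)) (L (4, k, i, j))" for k i j
  define LA where "LA k = mat m m (\<lambda>(i, j). LLA k i j)" for k
  define LB where "LB k = mat n n (\<lambda>(i, j). LLB k i j)" for k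
  have lp: "(\<lambda>N. ps (r N) k) \<longlonglongrightarrow> P k" if "k < KK" for k
  proof -
    have "(0::nat, k, 0::nat, 0::nat) \<in> Jx" using that unfolding Jx_def by auto
    then have "(\<lambda>N. X (r N) (0, k, 0, 0)) \<longlonglongrightarrow> L (0, k, 0, 0)" using r(2) by blast
    then show ?thesis unfolding X_def P_def by simp
  qed
  have lA': "(\<lambda>N. As (r N) k $$ (i, j)) \<longlonglongrightarrow> LLA k i j" if "k < KK" "i < m" "j < m" for k i j
  proof -
    have "(\<lambda>N. Re (As (r N) k $$ (i, j))) \<longlonglongrightarrow> L (1, k, i, j)"
    proof -
      have "(1::nat, k, i, j) \<in> Jx" using that unfolding Jx_def by auto
      then have "(\<lambda>N. X (r N) (1, k, i, j)) \<longlonglongrightarrow> L (1, k, i, j)" using r(2) by blast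
      then show ?thesis unfolding X_def by simp
    qed
    moreover have "(\<lambda>N. Im (As (r N) k $$ (i, j))) \<longlonglongrightarrow> L (2, k, i, j)"
    proof -
      have "(2::nat, k, i, j) \<in> Jx" using that unfolding Jx_def by auto
      then have "(\<lambda>N. X (r N) (2, k, i, j)) \<longlonglongrightarrow> L (2, k, i, j)" using r(2) by blast
      then show ?thesis unfolding X_def by simp
    qed
    ultimately have "(\<lambda>N. Complex (Re (As (r N) k $$ (i, j))) (Im (As (r N) k $$ (i, j)))) \<longlonglongrightarrow> LLA k i j"
      unfolding LLA_def by (rule tendsto_Complex)
    then show ?thesis by simp
  qed
  have lB': "(\<lambda>N. Bs (r N) k $$ (i, j)) \<longlonglongrightarrow> LLB k i j" if "k < KK" "i < n" "j < n" for k i j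
  proof -
    have "(\<lambda>N. Re (Bs (r N) k $$ (i, j))) \<longlonglongrightarrow> L (3, k, i, j)"
    proof -
      have "(3::nat, k, i, j) \<in> Jx" using that unfolding Jx_def by auto
      then have "(\<lambda>N. X (r N) (3, k, i, j)) \<longlonglongrightarrow> L (3, k, i, j)" using r(2) by blast
      then show ?thesis unfolding X_def by simp
    qed
    moreover have "(\<lambda>N. Im (Bs (r N) k $$ (i, j))) \<longlonglongrightarrow> L (4, k, i, j)"
    proof -
      have "(4::nat, k, i, j) \<in> Jx" using that unfolding Jx_def by auto
      then have "(\<lambda>N. X (r N) (4, k, i, j)) \<longlonglongrightarrow> L (4, k, i, j)" using r(2) by blast
      then show ?thesis unfolding X_def by simp
    qed
    ultimately have "(\<lambda>N. Complex (Re (Bs (r N) k $$ (i, j))) (Im (Bs (r N) k $$ (i, j)))) \<longlonglongrightarrow> LLB k i j"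
      unfolding LLB_def by (rule tendsto_Complex)
    then show ?thesis by simp
  qed
  have vL: "valid m n KK P LA LB"
    unfolding valid_def
  proof (intro conjI allI impI)
    fix k assume k: "k < KK"
    show "0 \<le> P k"
      using vN k by (intro LIMSEQ_le_const[OF lp[OF k]]) (auto simp: valid_def)
    show "is_state m (LA k)" unfolding LA_def
      using vN k by (intro state_limit[of m "\<lambda>N. As (r N) k"] lA') (auto simp: valid_def)
    show "is_state n (LB k)" unfolding LB_def
      using vN k by (intro state_limit[of n "\<lambda>N. Bs (r N) k"] lB') (auto simp: valid_def)
  next
    have "(\<lambda>N. \<Sum>k<KK. ps (r N) k) \<longlonglongrightarrow> (\<Sum>k<KK. P k)" by (intro tendsto_sum lp) auto
    moreover have "(\<lambda>N. \<Sum>k<KK. ps (r N) k) = (\<lambda>N. 1)" using vN unfolding valid_def by auto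
    ultimately have "(\<lambda>N. 1) \<longlonglongrightarrow> (\<Sum>k<KK. P k)" by simp
    then show "(\<Sum>k<KK. P k) = 1" using LIMSEQ_unique[OF tendsto_const] by metis
  qed
  have "(\<lambda>N. val (r N)) \<longlonglongrightarrow> dist2 d (cmb m n KK P LA LB) x"
    unfolding val_def
  proof (rule dist2_tendsto)
    fix i j assume ij: "i < d" "j < d"
    show "(\<lambda>N. cmb m n KK (ps (r N)) (As (r N)) (Bs (r N)) $$ (i, j)) \<longlonglongrightarrow> cmb m n KK P LA LB $$ (i, j)"
    proof (rule cmb_tendsto[OF vN vL])
      show "\<And>k. k < KK \<Longrightarrow> (\<lambda>N. ps (r N) k) \<longlonglongrightarrow> P k" by (rule lp)
      show "\<And>k i j. k < KK \<Longrightarrow> i < m \<Longrightarrow> j < m \<Longrightarrow> (\<lambda>N. As (r N) k $$ (i, j)) \<longlonglongrightarrow> LA k $$ (i, j)"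
        using lA' by (simp add: LA_def)
      show "\<And>k i j. k < KK \<Longrightarrow> i < n \<Longrightarrow> j < n \<Longrightarrow> (\<lambda>N. Bs (r N) k $$ (i, j)) \<longlonglongrightarrow> LB k $$ (i, j)"
        using lB' by (simp add: LB_def)
    qed (use ij d_def in auto)
  qed
  moreover have "(\<lambda>N. val (r N)) \<longlonglongrightarrow> \<delta>" using LIMSEQ_subseq_LIMSEQ[OF val_lim r(1)] by (simp add: o_def)
  ultimately have eq: "dist2 d (cmb m n KK P LA LB) x = \<delta>" using LIMSEQ_unique by blast
  show ?thesis using vL eq sep_lower unfolding d_def KK_def by metis
qed



lemma horodecki:
  assumes ent: "entangled m n x"
  shows "\<exists>W. ent_witness m n W \<and> detects W x"
proof -
  define d where "d = m * n"
  define KK where "KK = K0 m n"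
  have xs: "is_state d x" and nsep: "\<not> separable m n x" using ent unfolding entangled_def d_def by auto
  have xc: "x \<in> carrier_mat d d" using xs by (rule state_carrier)
  obtain P LA LB where vL: "valid m n KK P LA LB" and
    minz: "\<And>\<sigma>. separable m n \<sigma> \<Longrightarrow> dist2 d (cmb m n KK P LA LB) x \<le> dist2 d \<sigma> x"
    using minimizer[OF xs[unfolded d_def]] unfolding d_def KK_def by blast
  define z where "z = cmb m n KK P LA LB"
  have zc: "z \<in> carrier_mat d d" unfolding z_def d_def by (rule cmb_carrier)
  have zsep: "separable m n z" unfolding z_def using vL sep_iff by blast
  define a where "a i j = z $$ (i, j) - x $$ (i, j)" for i j
  define ipf where "ipf X = (\<Sum>i<d. \<Sum>j<d. Re (cnj (a i j) * X $$ (i, j)))" for X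
  define D where "D = dist2 d z x"
  have D_eq: "D = (\<Sum>i<d. \<Sum>j<d. (cmod (a i j))\<^sup>2)" unfolding D_def dist2_def a_def by simp
  \<comment> \<open>variational inequality on product states\<close>
  have var: "ipf z \<le> ipf (kron A B)" if sA: "is_state m A" and sB: "is_state n B" for A B
  proof -
    define q where "q = kron A B"
    have qc: "q \<in> carrier_mat d d" unfolding q_def d_def using state_carrier[OF sA] state_carrier[OF sB]
      by (auto simp: kron_def)
    define h where "h i j = q $$ (i, j) - z $$ (i, j)" for i j
    define G where "G = (\<Sum>i<d. \<Sum>j<d. Re (cnj (a i j) * h i j))"
    define H where "H = (\<Sum>i<d. \<Sum>j<d. (cmod (h i j))\<^sup>2)"
    have H0: "0 \<le> H" unfolding H_def by (intro sum_nonneg) auto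
    have "0 \<le> 2 * t * G + t\<^sup>2 * H" if t: "0 < t" "t \<le> 1" for t
    proof -
      define pt where "pt k = (if k < KK then (1 - t) * P k else t)" for k
      define At where "At k = (if k < KK then LA k else A)" for k
      define Bt where "Bt k = (if k < KK then LB k else B)" for k
      have vt: "valid m n (Suc KK) pt At Bt"
        unfolding valid_def
      proof (intro conjI allI impI)
        fix k assume "k < Suc KK"
        show "0 \<le> pt k" using vL t unfolding valid_def pt_def by auto
        show "is_state m (At k)" using vL sA unfolding valid_def At_def by auto
        show "is_state n (Bt k)" using vL sB unfolding valid_def Bt_def by auto
      next
        have "(\<Sum>k<Suc KK. pt k) = (\<Sum>k<KK. (1 - t) * P k) + t" by (simp add: pt_def)
        also have "\<dots> = 1" using vL unfolding valid_def by (simp add: flip: sum_distrib_left)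
        finally show "(\<Sum>k<Suc KK. pt k) = 1" .
      qed
      define st where "st = cmb m n (Suc KK) pt At Bt"
      have st_idx: "st $$ (i, j) = z $$ (i, j) + complex_of_real t * h i j" if ij: "i < d" "j < d" for i j
      proof -
        have "st $$ (i, j) = (\<Sum>k<KK. complex_of_real ((1 - t) * P k) * kron (LA k) (LB k) $$ (i, j))
             + complex_of_real t * q $$ (i, j)"
          using ij by (simp add: st_def cmb_index d_def pt_def At_def Bt_def q_def)
        also have "(\<Sum>k<KK. complex_of_real ((1 - t) * P k) * kron (LA k) (LB k) $$ (i, j))
            = complex_of_real (1 - t) * z $$ (i, j)"
          using ij by (simp add: z_def cmb_index d_def sum_distrib_left mult.assoc)
        finally show ?thesis by (simp add: h_def algebra_simps)
      qed
      have "separable m n st" unfolding st_def using vt sep_iff by blast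
      then have "D \<le> dist2 d st x" using minz unfolding D_def z_def by blast
      also have "dist2 d st x = (\<Sum>i<d. \<Sum>j<d. (cmod (a i j + complex_of_real t * h i j))\<^sup>2)"
        unfolding dist2_def by (intro sum.cong refl) (simp add: st_idx a_def algebra_simps)
      also have "\<dots> = (\<Sum>i<d. \<Sum>j<d. (cmod (a i j))\<^sup>2 + 2 * t * Re (cnj (a i j) * h i j) + t\<^sup>2 * (cmod (h i j))\<^sup>2)"
        by (simp only: cmod_expand)
      also have "\<dots> = D + 2 * t * G + t\<^sup>2 * H"
        unfolding D_eq G_def H_def by (simp only: sum.distrib sum_distrib_left[symmetric])
      finally show ?thesis by simp
    qed
    then have G0: "0 \<le> G" using small_t[OF H0] by blast
    have "G = ipf q - ipf z"
      unfolding G_def ipf_def h_def by (simp add: sum_subtractf right_diff_distrib)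
    then show ?thesis using G0 unfolding q_def by simp
  qed
  have sep_ge: "ipf z \<le> ipf \<sigma>" if sep: "separable m n \<sigma>" for \<sigma>
  proof -
    obtain K p A B where v: "valid m n K p A B" and e: "\<sigma> = cmb m n K p A B" using sep_iff[THEN iffD1, OF sep] by blast
    have "ipf \<sigma> = (\<Sum>k<K. p k * ipf (kron (A k) (B k)))"
      unfolding e ipf_def d_def by (rule ipf_cmb)
    also have "\<dots> \<ge> (\<Sum>k<K. p k * ipf z)"
      using v var unfolding valid_def by (intro sum_mono mult_left_mono) auto
    also have "(\<Sum>k<K. p k * ipf z) = ipf z" using v unfolding valid_def by (simp flip: sum_distrib_right)
    finally show ?thesis .
  qed
  have ipf_x: "ipf x = ipf z - D"
  proof -
    have "ipf x = (\<Sum>i<d. \<Sum>j<d. Re (cnj (a i j) * z $$ (i, j)) - Re (cnj (a i j) * a i j))"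
      unfolding ipf_def by (intro sum.cong refl) (simp add: a_def algebra_simps)
    also have "\<dots> = ipf z - D"
      unfolding ipf_def D_eq by (simp only: Re_cnj_self sum_subtractf)
    finally show ?thesis .
  qed
  have Dpos: "0 < D"
  proof (rule ccontr)
    assume "\<not> 0 < D"
    then have "D = 0" using dist2_nonneg unfolding D_def by (metis less_eq_real_def)
    have nn: "\<And>i. i \<in> {..<d} \<Longrightarrow> 0 \<le> (\<Sum>j<d. (cmod (a i j))\<^sup>2)" by (intro sum_nonneg) auto
    have h1: "\<forall>i\<in>{..<d}. (\<Sum>j<d. (cmod (a i j))\<^sup>2) = 0"
      using sum_nonneg_eq_0_iff[of "{..<d}" "\<lambda>i. \<Sum>j<d. (cmod (a i j))\<^sup>2"] nn \<open>D = 0\<close> unfolding D_eq by blast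
    have "\<forall>i<d. \<forall>j<d. (cmod (a i j))\<^sup>2 = 0"
    proof (intro allI impI)
      fix i j assume "i < d" "j < d"
      have nn2: "\<And>j. j \<in> {..<d} \<Longrightarrow> 0 \<le> (cmod (a i j))\<^sup>2" by simp
      have "(\<Sum>j<d. (cmod (a i j))\<^sup>2) = 0" using h1 \<open>i < d\<close> by blast
      then show "(cmod (a i j))\<^sup>2 = 0" using sum_nonneg_eq_0_iff[of "{..<d}" "\<lambda>j. (cmod (a i j))\<^sup>2"] nn2 \<open>j < d\<close> by blast
    qed
    then have "\<forall>i<d. \<forall>j<d. z $$ (i, j) = x $$ (i, j)" unfolding a_def by auto
    then have "z = x" using zc xc by (intro eq_matI) auto
    then show False using zsep nsep by simp
  qed
  define c0 where "c0 = ipf z"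
  define W where "W = mat d d (\<lambda>(i, j). cnj (a j i) - (if i = j then complex_of_real c0 else 0))"
  have Wc: "W \<in> carrier_mat d d" unfolding W_def by simp
  have aherm: "a i j = cnj (a j i)" if "i < d" "j < d" for i j
  proof -
    have "z $$ (i, j) = cnj (z $$ (j, i))" unfolding z_def by (rule herm_cmb[OF vL]) (use that d_def in auto)
    moreover have "x $$ (i, j) = cnj (x $$ (j, i))" using hermitianD[OF state_herm[OF xs], of i j] xc that by simp
    ultimately show ?thesis unfolding a_def by simp
  qed
  have Wherm: "hermitian W" unfolding hermitian_def
  proof (intro conjI allI impI)
    fix i j assume "i < dim_row W" "j < dim_row W"
    then have ij: "i < d" "j < d" by (auto simp: W_def)
    show "W $$ (i, j) = cnj (W $$ (j, i))" using ij aherm[OF ij(2,1)] by (simp add: W_def)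
  qed (simp add: W_def)
  have trW: "Re (trace_mat (W * \<sigma>)) = ipf \<sigma> - c0 * Re (trace_mat \<sigma>)" if sc: "\<sigma> \<in> carrier_mat d d" for \<sigma>
  proof -
    have "trace_mat (W * \<sigma>) = (\<Sum>i<d. \<Sum>j<d. W $$ (i, j) * \<sigma> $$ (j, i))" by (rule trace_mult[OF Wc sc])
    also have "\<dots> = (\<Sum>i<d. \<Sum>j<d. cnj (a j i) * \<sigma> $$ (j, i)) - (\<Sum>i<d. \<Sum>j<d. (if i = j then complex_of_real c0 else 0) * \<sigma> $$ (j, i))"
      by (simp add: W_def left_diff_distrib sum_subtractf)
    also have "(\<Sum>i<d. \<Sum>j<d. (if i = j then complex_of_real c0 else 0) * \<sigma> $$ (j, i)) = (\<Sum>i<d. complex_of_real c0 * \<sigma> $$ (i, i))"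
    proof (intro sum.cong refl)
      fix i assume i: "i \<in> {..<d}"
      show "(\<Sum>j<d. (if i = j then complex_of_real c0 else 0) * \<sigma> $$ (j, i)) = complex_of_real c0 * \<sigma> $$ (i, i)"
        using i by (subst sum_one[of i d]) auto
    qed
    also have "(\<Sum>i<d. \<Sum>j<d. cnj (a j i) * \<sigma> $$ (j, i)) = (\<Sum>j<d. \<Sum>i<d. cnj (a j i) * \<sigma> $$ (j, i))"
      by (rule sum.swap)
    finally have "trace_mat (W * \<sigma>) = (\<Sum>j<d. \<Sum>i<d. cnj (a j i) * \<sigma> $$ (j, i)) - complex_of_real c0 * trace_mat \<sigma>"
      using sc unfolding trace_mat_def by (simp add: sum_distrib_left)
    then show ?thesis unfolding ipf_def by (simp add: Re_sum)
  qed
  have "ent_witness m n W"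
    unfolding ent_witness_def
  proof (intro conjI allI impI)
    show "W \<in> carrier_mat (m * n) (m * n)" using Wc d_def by simp
    show "hermitian W" by (rule Wherm)
    fix \<sigma> assume sep: "separable m n \<sigma>"
    obtain K p A B where v: "valid m n K p A B" and e: "\<sigma> = cmb m n K p A B" using sep_iff[THEN iffD1, OF sep] by blast
    have sc: "\<sigma> \<in> carrier_mat d d" using e cmb_carrier d_def by simp
    have "trace_mat \<sigma> = 1" using e trace_cmb[OF v] by simp
    then show "0 \<le> Re (trace_mat (W * \<sigma>))" using trW[OF sc] sep_ge[OF sep] by (simp add: c0_def)
  next
    have "trace_mat x = 1" using xs unfolding is_state_def by simp
    then have "Re (trace_mat (W * x)) = - D" using trW[OF xc] ipf_x by (simp add: c0_def)
    then show "\<exists>\<sigma>. entangled m n \<sigma> \<and> detects W \<sigma>" using ent Dpos unfolding detects_def by auto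
  qed
  moreover have "detects W x"
  proof -
    have "trace_mat x = 1" using xs unfolding is_state_def by simp
    then have "Re (trace_mat (W * x)) = - D" using trW[OF xc] ipf_x by (simp add: c0_def)
    then show ?thesis using Dpos unfolding detects_def by simp
  qed
  ultimately show ?thesis by blast
qed



lemma trace_realpart_left:
  assumes "W \<in> carrier_mat d d" "R \<in> carrier_mat d d"
  shows "trace_mat (mat_realpart W * R) = (trace_mat (W * R) + trace_mat (mat_cnj W * R)) / 2"
proof -
  have "trace_mat (mat_realpart W * R) = (\<Sum>i<d. \<Sum>j<d. (W $$ (i, j) * R $$ (j, i) + cnj (W $$ (i, j)) * R $$ (j, i)) / 2)"
    using assms realpart_carrier[OF assms(1)]
    by (simp add: trace_mult realpart_index ring_distribs)
  also have "\<dots> = ((\<Sum>i<d. \<Sum>j<d. W $$ (i, j) * R $$ (j, i)) + (\<Sum>i<d. \<Sum>j<d. cnj (W $$ (i, j)) * R $$ (j, i))) / 2"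
    by (simp add: sum.distrib flip: sum_divide_distrib)
  finally show ?thesis using assms cnj_carrier[OF assms(1)]
    by (simp add: trace_mult mat_cnj_def)
qed

lemma sep_cnj: assumes sep: "separable m n \<sigma>" shows "separable m n (mat_cnj \<sigma>)"
proof -
  obtain K p A B where v: "valid m n K p A B" and e: "\<sigma> = cmb m n K p A B" using sep_iff[THEN iffD1, OF sep] by blast
  have v': "valid m n K p (\<lambda>k. mat_cnj (A k)) (\<lambda>k. mat_cnj (B k))"
    using v state_cnj unfolding valid_def by auto
  have "mat_cnj \<sigma> = cmb m n K p (\<lambda>k. mat_cnj (A k)) (\<lambda>k. mat_cnj (B k))"
  proof (intro eq_matI)
    fix r c assume "r < dim_row (cmb m n K p (\<lambda>k. mat_cnj (A k)) (\<lambda>k. mat_cnj (B k)))"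
      "c < dim_col (cmb m n K p (\<lambda>k. mat_cnj (A k)) (\<lambda>k. mat_cnj (B k)))"
    then have rc: "r < m * n" "c < m * n" by (auto simp: cmb_def)
    have "mat_cnj \<sigma> $$ (r, c) = (\<Sum>k<K. complex_of_real (p k) * cnj (kron (A k) (B k) $$ (r, c)))"
      using rc e by (simp add: mat_cnj_def cmb_def)
    also have "\<dots> = (\<Sum>k<K. complex_of_real (p k) * kron (mat_cnj (A k)) (mat_cnj (B k)) $$ (r, c))"
    proof (intro sum.cong refl)
      fix k assume "k \<in> {..<K}"
      then have "A k \<in> carrier_mat m m" "B k \<in> carrier_mat n n" using v unfolding valid_def by (auto intro: state_carrier)
      then show "complex_of_real (p k) * cnj (kron (A k) (B k) $$ (r, c)) =
          complex_of_real (p k) * kron (mat_cnj (A k)) (mat_cnj (B k)) $$ (r, c)"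
      proof -
        have "kron (mat_cnj (A k)) (mat_cnj (B k)) $$ (r, c) = cnj (kron (A k) (B k) $$ (r, c))"
          unfolding kron_cnj using rc \<open>A k \<in> carrier_mat m m\<close> \<open>B k \<in> carrier_mat n n\<close>
          by (simp add: mat_cnj_def kron_def)
        then show ?thesis by simp
      qed
    qed
    also have "\<dots> = cmb m n K p (\<lambda>k. mat_cnj (A k)) (\<lambda>k. mat_cnj (B k)) $$ (r, c)"
      using rc by (simp add: cmb_index)
    finally show "mat_cnj \<sigma> $$ (r, c) = cmb m n K p (\<lambda>k. mat_cnj (A k)) (\<lambda>k. mat_cnj (B k)) $$ (r, c)" .
  qed (auto simp: e cmb_def mat_cnj_def)
  then show ?thesis using v' sep_iff by blast
qed

lemma sep_carrier: "separable m n \<sigma> \<Longrightarrow> \<sigma> \<in> carrier_mat (m * n) (m * n)"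
  unfolding separable_def by simp

lemma partb:
  assumes W: "ent_witness m n W" and ent: "entangled m n \<rho>" and r: "real_mat \<rho>" and det: "detects W \<rho>"
  shows "ent_witness m n (mat_cnj W) \<and> detects (mat_cnj W) \<rho> \<and>
         ent_witness m n (mat_realpart W) \<and> detects (mat_realpart W) \<rho>"
proof -
  have Wc: "W \<in> carrier_mat (m * n) (m * n)" and Wh: "hermitian W"
    and Wpos: "\<And>\<sigma>. separable m n \<sigma> \<Longrightarrow> 0 \<le> Re (trace_mat (W * \<sigma>))"
    using W unfolding ent_witness_def by auto
  have \<rho>c: "\<rho> \<in> carrier_mat (m * n) (m * n)" using ent unfolding entangled_def is_state_def by simp
  have cnjtr: "Re (trace_mat (mat_cnj W * \<sigma>)) = Re (trace_mat (W * mat_cnj \<sigma>))" if "\<sigma> \<in> carrier_mat (m * n) (m * n)" for \<sigma>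
    using trace_cnj_left[OF Wc that] by simp
  have rptr: "Re (trace_mat (mat_realpart W * \<sigma>)) = (Re (trace_mat (W * \<sigma>)) + Re (trace_mat (mat_cnj W * \<sigma>))) / 2"
    if "\<sigma> \<in> carrier_mat (m * n) (m * n)" for \<sigma>
    by (subst trace_realpart_left[OF Wc that]) simp
  have cnjpos: "0 \<le> Re (trace_mat (mat_cnj W * \<sigma>))" if "separable m n \<sigma>" for \<sigma>
    using cnjtr[OF sep_carrier[OF that]] Wpos[OF sep_cnj[OF that]] by simp
  have cnjdet: "Re (trace_mat (mat_cnj W * \<rho>)) = Re (trace_mat (W * \<rho>))"
    using cnjtr[OF \<rho>c] real_mat_cnj[OF r] by simp
  have d1: "detects (mat_cnj W) \<rho>" using cnjdet det unfolding detects_def by simp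
  have d2: "detects (mat_realpart W) \<rho>" using cnjdet det rptr[OF \<rho>c] unfolding detects_def by simp
  have "ent_witness m n (mat_cnj W)"
    unfolding ent_witness_def using cnj_carrier[OF Wc] hermitian_cnj[OF Wh] cnjpos ent d1 by blast
  moreover have "ent_witness m n (mat_realpart W)"
    unfolding ent_witness_def
  proof (intro conjI allI impI)
    show "mat_realpart W \<in> carrier_mat (m * n) (m * n)" using realpart_carrier[OF Wc] .
    show "hermitian (mat_realpart W)" using hermitian_realpart[OF Wh] .
    fix \<sigma> assume "separable m n \<sigma>"
    then show "0 \<le> Re (trace_mat (mat_realpart W * \<sigma>))"
      using rptr[OF sep_carrier] Wpos cnjpos by (metis add_nonneg_nonneg divide_nonneg_pos zero_less_numeral)
  next
    show "\<exists>\<sigma>. entangled m n \<sigma> \<and> detects (mat_realpart W) \<sigma>" using ent d2 by blast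
  qed
  ultimately show ?thesis using d1 d2 by blast
qed

theorem theorem1:
  fixes m n :: nat
  shows
   "(\<forall>W \<rho>. ent_witness m n W \<and> real_mat W \<and> entangled m n \<rho> \<and> detects W \<rho> \<longrightarrow>
        detects W (mat_cnj \<rho>) \<and> detects W (mat_realpart \<rho>)) \<and>
    (\<forall>W \<rho>. entangled m n \<rho> \<and> real_mat \<rho> \<and> ent_witness m n W \<and> detects W \<rho> \<longrightarrow>
        ent_witness m n (mat_cnj W) \<and> detects (mat_cnj W) \<rho> \<and>
        ent_witness m n (mat_realpart W) \<and> detects (mat_realpart W) \<rho>) \<and>
    (\<forall>\<rho>. entangled m n \<rho> \<longrightarrow>
        ((\<exists>W. ent_witness m n W \<and> real_mat W \<and> detects W \<rho>) \<longleftrightarrow>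
         (real_mat (mat_realpart \<rho>) \<and> entangled m n (mat_realpart \<rho>))))"
proof -
 have P1: "\<forall>W \<rho>. ent_witness m n W \<and> real_mat W \<and> entangled m n \<rho> \<and> detects W \<rho> \<longrightarrow>
        detects W (mat_cnj \<rho>) \<and> detects W (mat_realpart \<rho>)"
 proof (intro allI impI conjI)
  fix W \<rho> assume h: "ent_witness m n W \<and> real_mat W \<and> entangled m n \<rho> \<and> detects W \<rho>"
  have Wc: "W \<in> carrier_mat (m * n) (m * n)" using h unfolding ent_witness_def by simp
  have \<rho>c: "\<rho> \<in> carrier_mat (m * n) (m * n)" using h unfolding entangled_def is_state_def by simp
  show "detects W (mat_cnj \<rho>)" using h Re_real_cnj(1)[OF _ Wc \<rho>c] unfolding detects_def by simp
  show "detects W (mat_realpart \<rho>)" using h Re_real_cnj(2)[OF _ Wc \<rho>c] unfolding detects_def by simp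
qed
 have P2: "\<forall>W \<rho>. entangled m n \<rho> \<and> real_mat \<rho> \<and> ent_witness m n W \<and> detects W \<rho> \<longrightarrow>
        ent_witness m n (mat_cnj W) \<and> detects (mat_cnj W) \<rho> \<and>
        ent_witness m n (mat_realpart W) \<and> detects (mat_realpart W) \<rho>"
 proof (intro allI impI)
  fix W \<rho> assume h: "entangled m n \<rho> \<and> real_mat \<rho> \<and> ent_witness m n W \<and> detects W \<rho>"
  then show "ent_witness m n (mat_cnj W) \<and> detects (mat_cnj W) \<rho> \<and>
        ent_witness m n (mat_realpart W) \<and> detects (mat_realpart W) \<rho>"
    using partb by blast
 qed
 have P3: "\<forall>\<rho>. entangled m n \<rho> \<longrightarrow>
        ((\<exists>W. ent_witness m n W \<and> real_mat W \<and> detects W \<rho>) \<longleftrightarrow>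
         (real_mat (mat_realpart \<rho>) \<and> entangled m n (mat_realpart \<rho>)))"
 proof (intro allI impI)
  fix \<rho> assume ent: "entangled m n \<rho>"
  have \<rho>s: "is_state (m * n) \<rho>" using ent unfolding entangled_def by simp
  have \<rho>c: "\<rho> \<in> carrier_mat (m * n) (m * n)" using \<rho>s unfolding is_state_def by simp
  show "(\<exists>W. ent_witness m n W \<and> real_mat W \<and> detects W \<rho>) \<longleftrightarrow>
         (real_mat (mat_realpart \<rho>) \<and> entangled m n (mat_realpart \<rho>))"
  proof
    assume "\<exists>W. ent_witness m n W \<and> real_mat W \<and> detects W \<rho>"
    then obtain W where W: "ent_witness m n W" "real_mat W" "detects W \<rho>" by blast
    have Wc: "W \<in> carrier_mat (m * n) (m * n)" using W unfolding ent_witness_def by simp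
    have det: "detects W (mat_realpart \<rho>)" using W Re_real_cnj(2)[OF _ Wc \<rho>c] unfolding detects_def by simp
    have "\<not> separable m n (mat_realpart \<rho>)"
      using det W(1) unfolding ent_witness_def detects_def by force
    then show "real_mat (mat_realpart \<rho>) \<and> entangled m n (mat_realpart \<rho>)"
      using realpart_real state_realpart[OF \<rho>s] unfolding entangled_def by simp
  next
    assume h: "real_mat (mat_realpart \<rho>) \<and> entangled m n (mat_realpart \<rho>)"
    obtain W0 where W0: "ent_witness m n W0" "detects W0 (mat_realpart \<rho>)" using horodecki h by blast
    have "ent_witness m n (mat_realpart W0)" "detects (mat_realpart W0) (mat_realpart \<rho>)"
      using partb[OF W0(1) _ _ W0(2)] h by auto
    moreover have "real_mat (mat_realpart W0)" by (rule realpart_real)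
    moreover have "mat_realpart W0 \<in> carrier_mat (m * n) (m * n)"
      using W0(1) realpart_carrier unfolding ent_witness_def by blast
    ultimately have "detects (mat_realpart W0) \<rho>"
      using Re_real_cnj(2)[OF _ _ \<rho>c] unfolding detects_def by metis
    then show "\<exists>W. ent_witness m n W \<and> real_mat W \<and> detects W \<rho>"
      using \<open>ent_witness m n (mat_realpart W0)\<close> \<open>real_mat (mat_realpart W0)\<close> by blast
  qed
 qed
 show ?thesis using P1 P2 P3 by blast
qed

end
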